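(* Let $v,a,b,c\in\mathbb{C}$ with $\Re(v)<3$, $\Re(c)>0$, and $\Re(vc+a+b)>0$, $\Re(vc+a-b)>0$, $\Re(vc-a+b)>0$, $\Re(vc-a-b)>0$. Fix a square root $\sqrt{a^2-b^2}$ and put $\sigma_1=\frac v2-\frac{\sqrt{a^2-b^2}}{2c}$, $\sigma_2=\frac v2+\frac{\sqrt{a^2-b^2}}{2c}$, $\sigma_3=\frac v2-\frac{a}{2c}-\frac{b}{2c}$, $\sigma_4=\frac v2-\frac{a}{2c}+\frac{b}{2c}$, $\sigma_5=\frac v2+\frac{a}{2c}+\frac{b}{2c}$, $\sigma_6=\frac v2+\frac{a}{2c}-\frac{b}{2c}$, $P=(vc-a-b)(vc+a+b)(vc-a+b)(vc+a-b)$; assume $\sigma_1,\sigma_2\notin\mathbb{Z}_0^-$ and $1+\sigma_j\notin\mathbb{Z}_0^-$ ($j=3,4,5,6$). Then $$ \int_0^\infty\frac{\sinh(ax)\cosh(bx)}{\cosh^{v}(cx)}\,dx=\frac{2^{v}(v^2ac^2-a^3+ab^2)}{P}\;{}_7F_6\!\left(\begin{matrix}v,\ 1+\sigma_1,\ 1+\sigma_2,\ \sigma_3,\ \sigma_4,\ \sigma_5,\ \sigma_6\\ \sigma_1,\ \sigma_2,\ 1+\sigma_3,\ 1+\sigma_4,\ 1+\sigma_5,\ 1+\sigma_6\end{matrix};\,-1\right). $$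
   Context: $\mathbb{Z}_0^-=\{0,-1,-2,\dots\}$. The Pochhammer symbol is $(\lambda)_0=1$, $(\lambda)_n=\lambda(\lambda+1)\cdots(\lambda+n-1)$ for $n\ge1$. The generalized hypergeometric series is ${}_pF_q\!\left(\begin{matrix}\alpha_1,\dots,\alpha_p\\ \beta_1,\dots,\beta_q\end{matrix};z\right)=\sum_{n=0}^\infty\frac{(\alpha_1)_n\cdots(\alpha_p)_n}{(\beta_1)_n\cdots(\beta_q)_n}\frac{z^n}{n!}$ (with no $\beta_j\in\mathbb{Z}_0^-$); when $p=q+1$ and $z=-1$ it converges if $\Re(\sum\beta_j-\sum\alpha_i)>-1$. For $\Re(c)>0$ and $x>0$, the complex power $\cosh^{v}(cx)$ means $2^{-v}e^{vcx}(1+e^{-2cx})^{v}$, with the principal branch of $(1+e^{-2cx})^{v}$ (this agrees with the ordinary real power when $c>0$ and $v$ is real). *)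

theory Defs
  imports "HOL-Analysis.Analysis"
begin

definition hypergeom :: "complex list \<Rightarrow> complex list \<Rightarrow> complex \<Rightarrow> complex" where
  "hypergeom as bs z =
     (\<Sum>n. (\<Prod>a\<leftarrow>as. pochhammer a n) / (\<Prod>b\<leftarrow>bs. pochhammer b n) * z ^ n / fact n)"

text \<open>Complex power cosh^v(c x) := 2^(-v) e^(v c x) (1 + e^(-2 c x))^v, principal branch.\<close>
definition cosh_pow :: "complex \<Rightarrow> complex \<Rightarrow> real \<Rightarrow> complex" where
  "cosh_pow v c x = (2::complex) powr (-v) * exp (v * c * complex_of_real x)
      * (1 + exp (-2 * c * complex_of_real x)) powr v"

end

theory Submission
  imports Defs "HOL-Real_Asymp.Real_Asymp"
begin


lemma exp_has_integral_0_inf: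
  fixes \<mu> :: complex
  assumes "Re \<mu> > 0"
  shows "((\<lambda>x::real. exp (-(\<mu> * of_real x))) has_integral 1/\<mu>) {0..}"
proof -
  have mu0: "\<mu> \<noteq> 0" using assms by auto
  define f where "f = (\<lambda>(k::nat) (x::real). if 0 \<le> x \<and> x \<le> real k then exp (-(\<mu> * of_real x)) else 0)"
  have fin: "((\<lambda>x::real. exp (-(\<mu> * of_real x))) has_integral (1 - exp (-(\<mu> * of_real T)))/\<mu>) {0..T}"
    if "T \<ge> 0" for T :: real
  proof -
    have "\<And>t. t \<in> {0..T} \<Longrightarrow> ((\<lambda>x. - exp (-(\<mu> * x)) / \<mu>) has_vector_derivative exp (-(\<mu> * t))) (at t within {0..T})"
      using mu0
      by (intro derivative_eq_intros has_complex_derivative_imp_has_vector_derivative [unfolded o_def] | simp)+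
    then have "((\<lambda>t. exp (-(\<mu> * of_real t))) has_integral (- exp (-(\<mu> * of_real T)) / \<mu> - (- exp (-(\<mu> * of_real 0)) / \<mu>))) {0..T}"
      by (meson fundamental_theorem_of_calculus \<open>T \<ge> 0\<close>)
    then show ?thesis by (simp add: diff_divide_distrib)
  qed
  have fk: "(f k has_integral (1 - exp (-(\<mu> * of_nat k)))/\<mu>) {0..}" for k
  proof (rule has_integral_on_superset[where S="{0..real k}"])
    show "(f k has_integral (1 - exp (-(\<mu> * of_nat k)))/\<mu>) {0..real k}"
      using fin[of "real k"] by (subst has_integral_cong[where g="\<lambda>x. exp (-(\<mu> * of_real x))"]) (auto simp: f_def)
  qed (auto simp: f_def)
  have h: "(\<lambda>x::real. exp (- (Re \<mu> * x))) integrable_on {0..}"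
    using integrable_on_exp_minus_to_infinity[of "Re \<mu>" 0] assms by simp
  have bnd: "\<forall>x\<in>{0..}. norm (f k x) \<le> exp (- (Re \<mu> * x))" for k
    by (auto simp: f_def norm_exp_eq_Re)
  have conv: "\<forall>x\<in>{0..}. (\<lambda>k. f k x) \<longlonglongrightarrow> exp (-(\<mu> * of_real x))"
  proof
    fix x :: real assume x0: "x \<in> {0..}"
    obtain N :: nat where "x \<le> real N" using real_arch_simple by blast
    then have "\<forall>k\<ge>N. f k x = exp (-(\<mu> * of_real x))" using x0 by (auto simp: f_def)
    then show "(\<lambda>k. f k x) \<longlonglongrightarrow> exp (-(\<mu> * of_real x))"
      by (intro tendsto_eventually) (auto simp: eventually_sequentially)
  qed
  have lim: "(\<lambda>k::nat. (1 - exp (-(\<mu> * of_nat k)))/\<mu>) \<longlonglongrightarrow> 1/\<mu>"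
  proof -
    have "(\<lambda>k::nat. exp (-(\<mu> * of_nat k))) \<longlonglongrightarrow> 0"
    proof (rule tendsto_norm_zero_cancel)
      have "(\<lambda>k::nat. exp (- (Re \<mu> * real k))) \<longlonglongrightarrow> 0"
        using assms by real_asymp
      then show "(\<lambda>k::nat. norm (exp (-(\<mu> * of_nat k)))) \<longlonglongrightarrow> 0"
        by (simp add: norm_exp_eq_Re)
    qed
    from tendsto_diff[OF tendsto_const[of 1] this]
    show ?thesis using tendsto_divide[OF _ tendsto_const[of \<mu>]] mu0 by fastforce
  qed
  show ?thesis
    by (rule has_integral_dominated_convergence[OF fk h bnd conv lim])
qed


lemma abel_aux:
  fixes c :: "nat \<Rightarrow> complex"
  assumes N: "\<forall>k\<ge>N. norm (c k) \<le> e" and M: "\<forall>k. norm (c k) \<le> M"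
    and r: "0 \<le> r" "r < 1"
  shows "summable (\<lambda>k. norm (c k * of_real r ^ k))"
    and "norm (of_real (1-r) * (\<Sum>k. c k * of_real r ^ k)) \<le> (1-r) * (\<Sum>k<N. norm (c k)) + e"
proof -
  have g: "summable (\<lambda>k. r ^ k)" using r by (intro summable_geometric) auto
  have nrm: "norm (c k * of_real r ^ k) = norm (c k) * r ^ k" for k
    using r by (simp add: norm_mult norm_power)
  show sm: "summable (\<lambda>k. norm (c k * of_real r ^ k))"
    unfolding nrm
    by (rule summable_comparison_test[OF _ summable_mult[OF g, of M]])
       (use M r in \<open>auto intro!: mult_right_mono\<close>)
  have e0: "e \<ge> 0" using N norm_ge_zero order_trans by blast
  have "norm (\<Sum>k. c k * of_real r ^ k) \<le> (\<Sum>k. norm (c k * of_real r ^ k))"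
    by (rule summable_norm[OF sm])
  also have "\<dots> = (\<Sum>k. norm (c (k+N) * of_real r ^ (k+N))) + (\<Sum>k<N. norm (c k * of_real r ^ k))"
    by (rule suminf_split_initial_segment[OF sm])
  also have "(\<Sum>k<N. norm (c k * of_real r ^ k)) \<le> (\<Sum>k<N. norm (c k))"
    unfolding nrm using r by (intro sum_mono) (auto intro!: mult_left_le power_le_one)
  also have "(\<Sum>k. norm (c (k+N) * of_real r ^ (k+N))) \<le> (\<Sum>k. e * r ^ k)"
  proof (rule suminf_le)
    show "summable (\<lambda>k. norm (c (k+N) * of_real r ^ (k+N)))"
      using sm by (subst summable_iff_shift) 
    show "summable (\<lambda>k. e * r ^ k)" by (rule summable_mult[OF g])
    fix k
    have "norm (c (k+N)) * r ^ (k+N) \<le> e * r ^ (k+N)"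
      using N r by (intro mult_right_mono) auto
    also have "\<dots> \<le> e * r ^ k" using r e0
      by (intro mult_left_mono power_decreasing) auto
    finally show "norm (c (k+N) * of_real r ^ (k+N)) \<le> e * r ^ k" unfolding nrm .
  qed
  also have "(\<Sum>k. e * r ^ k) = e / (1 - r)"
    using r by (simp add: suminf_mult suminf_geometric divide_simps)
  finally have "norm (\<Sum>k. c k * of_real r ^ k) \<le> e / (1 - r) + (\<Sum>k<N. norm (c k))" by simp
  then have "(1-r) * norm (\<Sum>k. c k * of_real r ^ k) \<le> (1-r) * (e / (1 - r) + (\<Sum>k<N. norm (c k)))"
    using r by (intro mult_left_mono) auto
  then show "norm (of_real (1-r) * (\<Sum>k. c k * of_real r ^ k)) \<le> (1-r) * (\<Sum>k<N. norm (c k)) + e"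
  proof -
    have "norm (of_real (1-r) * (\<Sum>k. c k * of_real r ^ k)) = (1-r) * norm (\<Sum>k. c k * of_real r ^ k)"
      using r by (simp add: norm_mult del: of_real_diff)
    also have "(1-r) * (e / (1 - r) + (\<Sum>k<N. norm (c k))) = (1-r) * (\<Sum>k<N. norm (c k)) + e"
      using r by (simp add: field_simps)
    ultimately show ?thesis using \<open>(1-r) * norm _ \<le> _\<close> by linarith
  qed
qed

lemma abel_zero:
  fixes c :: "nat \<Rightarrow> complex"
  assumes c: "c \<longlonglongrightarrow> 0" and t: "t \<longlonglongrightarrow> 1" "\<And>n. 0 \<le> t n" "\<And>n. t n < 1"
  shows "(\<lambda>n. of_real (1 - t n) * (\<Sum>k. c k * of_real (t n) ^ k)) \<longlonglongrightarrow> 0"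
proof (rule LIMSEQ_I)
  fix e :: real assume e: "e > 0"
  obtain M where M: "\<forall>k. norm (c k) \<le> M"
    using convergent_imp_bounded[of c] c unfolding bounded_iff convergent_def by auto
  obtain N where N: "\<forall>k\<ge>N. norm (c k) \<le> e/2"
    using LIMSEQ_D[OF c, of "e/2"] e by (auto intro: less_imp_le)
  define K where "K = (\<Sum>k<N. norm (c k))"
  have "(\<lambda>n. (1 - t n) * K) \<longlonglongrightarrow> (1 - 1) * K"
    by (intro tendsto_intros t)
  then have "\<exists>n0. \<forall>n\<ge>n0. norm ((1 - t n) * K - 0) < e/2"
    using e by (intro LIMSEQ_D) auto
  then obtain n0 where n0: "\<forall>n\<ge>n0. norm ((1 - t n) * K) < e/2" by auto
  show "\<exists>n0. \<forall>n\<ge>n0. norm (of_real (1 - t n) * (\<Sum>k. c k * of_real (t n) ^ k) - 0) < e"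
  proof (intro exI allI impI)
    fix n assume "n0 \<le> n"
    then have "(1 - t n) * K < e/2" using n0 by auto
    moreover have "norm (of_real (1 - t n) * (\<Sum>k. c k * of_real (t n) ^ k)) \<le> (1 - t n) * K + e/2"
      using abel_aux(2)[OF N M t(2,3)] unfolding K_def .
    ultimately show "norm (of_real (1 - t n) * (\<Sum>k. c k * of_real (t n) ^ k) - 0) < e" by simp
  qed
qed

lemma abel_seq:
  fixes a :: "nat \<Rightarrow> complex"
  assumes a: "a sums s" and t: "t \<longlonglongrightarrow> 1" "\<And>n. 0 \<le> t n" "\<And>n. t n < 1"
  shows "(\<lambda>n. \<Sum>k. a k * of_real (t n) ^ k) \<longlonglongrightarrow> s"
proof -
  define S where "S k = (\<Sum>i<Suc k. a i)" for k
  have S: "S \<longlonglongrightarrow> s" using a unfolding sums_def S_def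
    by (rule LIMSEQ_Suc)
  have c: "(\<lambda>k. S k - s) \<longlonglongrightarrow> 0" using tendsto_diff[OF S tendsto_const[of s]] by simp
  have key: "(\<Sum>k. a k * of_real r ^ k) - s = of_real (1 - r) * (\<Sum>k. (S k - s) * of_real r ^ k)"
    if r: "0 \<le> r" "r < 1" for r :: real
  proof -
    obtain M where M: "\<forall>k. norm (S k - s) \<le> M"
      using convergent_imp_bounded[of "\<lambda>k. S k - s"] c unfolding bounded_iff convergent_def by auto
    have sm1: "summable (\<lambda>k. (S k - s) * of_real r ^ k)"
    proof -
      have "summable (\<lambda>k. norm ((S k - s) * of_real r ^ k))"
        using abel_aux(1)[of 0 "\<lambda>k. S k - s" M M r] M r by simp
      then show ?thesis by (rule summable_norm_cancel)
    qed
    have g: "(\<lambda>k. of_real r ^ k :: complex) sums (1 / (1 - of_real r))"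
      using r by (intro geometric_sums) auto
    have sm2: "summable (\<lambda>k. S k * of_real r ^ k)"
      using summable_add[OF sm1 summable_mult[OF sums_summable[OF g], of s]]
      by (simp add: algebra_simps)
    have sh: "(\<lambda>k. S k * of_real r ^ k - of_real r * (if k = 0 then 0 else S (k - 1) * of_real r ^ (k - 1))) sums
              ((\<Sum>k. S k * of_real r ^ k) - of_real r * (\<Sum>k. S k * of_real r ^ k))"
    proof (intro sums_diff sums_mult summable_sums sm2)
      have "(\<lambda>k. if k = 0 then 0 else S (k - 1) * of_real r ^ (k - 1)) sums (0 + (\<Sum>k. S k * of_real r ^ k))"
        using sums_Suc_iff[of "\<lambda>k. if k = 0 then 0 else S (k - 1) * of_real r ^ (k - 1)" "(\<Sum>k. S k * of_real r ^ k)"]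
          summable_sums[OF sm2] by simp
      then show "(\<lambda>k. if k = 0 then 0 else S (k - 1) * of_real r ^ (k - 1)) sums (\<Sum>k. S k * of_real r ^ k)" by simp
    qed
    have eq: "S k * of_real r ^ k - of_real r * (if k = 0 then 0 else S (k - 1) * of_real r ^ (k - 1)) = a k * of_real r ^ k" for k
    proof (cases k)
      case (Suc m) then show ?thesis by (simp add: S_def algebra_simps)
    qed (simp add: S_def)
    have A: "(\<Sum>k. a k * of_real r ^ k) = of_real (1 - r) * (\<Sum>k. S k * of_real r ^ k)"
      using sums_unique[OF sh[unfolded eq]] by (simp add: algebra_simps)
    have B: "(\<Sum>k. (S k - s) * of_real r ^ k) = (\<Sum>k. S k * of_real r ^ k) - s / (1 - of_real r)"
    proof -
      have "(\<lambda>k. S k * of_real r ^ k - s * of_real r ^ k) sums ((\<Sum>k. S k * of_real r ^ k) - s * (1 / (1 - of_real r)))"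
        by (intro sums_diff summable_sums sm2 sums_mult g)
      then show ?thesis by (simp add: sums_iff algebra_simps)
    qed
    have r1: "(1::complex) - of_real r \<noteq> 0" proof
      assume "(1::complex) - of_real r = 0"
      then have "complex_of_real r = of_real 1" by simp
      then have "r = 1" by (simp only: of_real_eq_iff)
      then show False using r by simp
    qed
    show ?thesis unfolding A B using r1 by (simp add: field_simps)
  qed
  have "(\<lambda>n. (\<Sum>k. a k * of_real (t n) ^ k) - s) \<longlonglongrightarrow> 0"
  proof -
    have "(\<lambda>n. (\<Sum>k. a k * of_real (t n) ^ k) - s) = (\<lambda>n. of_real (1 - t n) * (\<Sum>k. (S k - s) * of_real (t n) ^ k))"
      using key[OF t(2,3)] by (intro ext) 
    then show ?thesis using abel_zero[OF c t] by simp
  qed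
  from tendsto_add[OF this tendsto_const[of s]] show ?thesis by simp
qed


lemma exp_lin4:
  fixes m c X :: complex and k :: nat
  shows "exp (-((m + 2 * of_nat k * c) * X)) = exp (-2*c*X) ^ k * exp (-(m*X))"
proof -
  have "exp (-2*c*X) ^ k = exp (of_nat k * (-2*c*X))" by (simp only: exp_of_nat_mult)
  then have "exp (-2*c*X) ^ k * exp (-(m*X)) = exp (of_nat k * (-2*c*X) + -(m*X))" by (simp only: exp_add)
  also have "of_nat k * (-2*c*X) + -(m*X) = -((m + 2 * of_nat k * c) * X)" by (simp add: algebra_simps)
  finally show ?thesis by simp
qed

lemma sinh_cosh_exp:
  fixes a b V X :: complex
  shows "exp (-(V*X)) * (sinh (a*X) * cosh (b*X)) =
     (exp (-((V-a-b)*X)) + exp (-((V-a+b)*X)) - exp (-((V+a-b)*X)) - exp (-((V+a+b)*X))) / 4"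
proof -
  have e: "exp (-((V+p+q)*X)) = exp (-(V*X)) * exp (-(p*X)) * exp (-(q*X))" for p q
    by (simp add: exp_add[symmetric] algebra_simps)
  have 1: "exp (-((V-a-b)*X)) = exp (-(V*X)) * exp (a*X) * exp (b*X)" using e[of "-a" "-b"] by simp
  have 2: "exp (-((V-a+b)*X)) = exp (-(V*X)) * exp (a*X) * exp (-(b*X))" using e[of "-a" "b"] by simp
  have 3: "exp (-((V+a-b)*X)) = exp (-(V*X)) * exp (-(a*X)) * exp (b*X)" using e[of "a" "-b"] by simp
  have 4: "exp (-((V+a+b)*X)) = exp (-(V*X)) * exp (-(a*X)) * exp (-(b*X))" using e[of "a" "b"] by simp
  show ?thesis unfolding 1 2 3 4 sinh_def cosh_def by (simp add: field_simps)
qed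


lemma binom_abs_summable:
  fixes u :: complex and r :: real
  assumes "0 \<le> r" "r < 1"
  shows "summable (\<lambda>k. norm (u gchoose k) * r ^ k)"
proof -
  define r0 where "r0 = (1 + r) / 2"
  have r0: "r < r0" "r0 < 1" "0 \<le> r0" using assms by (auto simp: r0_def)
  have "(\<lambda>n. (u gchoose n) * of_real r0 ^ n) sums (1 + of_real r0) powr u"
    using r0 by (intro gen_binomial_complex) auto
  then have "(\<lambda>n. (u gchoose n) * of_real r0 ^ n) \<longlonglongrightarrow> 0"
    using summable_LIMSEQ_zero sums_summable by blast
  then obtain M where M: "\<And>n. norm ((u gchoose n) * of_real r0 ^ n) \<le> M"
    using convergent_imp_bounded[of "\<lambda>n. (u gchoose n) * of_real r0 ^ n"]
    unfolding bounded_iff convergent_def by auto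
  show ?thesis
    by (rule Abel_lemma[OF assms(1) r0(1), of _ M]) (use M r0 in \<open>simp add: norm_mult norm_power\<close>)
qed

lemma norm4: "norm (p + q - r - t :: complex) \<le> norm p + norm q + norm r + norm t"
proof -
  have "norm (p+q-r-t) \<le> norm (p+q-r) + norm t" by (rule norm_triangle_ineq4)
  moreover have "norm (p+q-r) \<le> norm (p+q) + norm r" by (rule norm_triangle_ineq4)
  moreover have "norm (p+q) \<le> norm p + norm q" by (rule norm_triangle_ineq)
  ultimately show ?thesis by linarith
qed

locale intg =
  fixes v a b c :: complex
  assumes cpos: "Re c > 0"
    and p1: "Re (v * c + a + b) > 0" and p2: "Re (v * c + a - b) > 0"
    and p3: "Re (v * c - a + b) > 0" and p4: "Re (v * c - a - b) > 0"
begin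

definition m1 :: complex where "m1 = v * c - a - b"
definition m2 :: complex where "m2 = v * c - a + b"
definition m3 :: complex where "m3 = v * c + a - b"
definition m4 :: complex where "m4 = v * c + a + b"

lemma Re_m: "Re m1 > 0" "Re m2 > 0" "Re m3 > 0" "Re m4 > 0"
  using p1 p2 p3 p4 by (auto simp: m1_def m2_def m3_def m4_def)

lemma Re_mk: "Re (m + 2 * of_nat k * c) > 0" if "Re m > 0" for m
proof -
  have "Re (m + 2 * of_nat k * c) = Re m + 2 * real k * Re c" by simp
  moreover have "2 * real k * Re c \<ge> 0" using cpos by simp
  ultimately show ?thesis using that by linarith
qed

definition "w x = exp (-2 * c * complex_of_real x)"
definition "E0 x = exp (-(v * c * complex_of_real x)) * (sinh (a * complex_of_real x) * cosh (b * complex_of_real x))"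
definition "Ek k x = (exp (-((m1 + 2 * of_nat k * c) * complex_of_real x)) + exp (-((m2 + 2 * of_nat k * c) * complex_of_real x))
   - exp (-((m3 + 2 * of_nat k * c) * complex_of_real x)) - exp (-((m4 + 2 * of_nat k * c) * complex_of_real x))) / 4"
definition "Jk k = (1/(m1 + 2 * of_nat k * c) + 1/(m2 + 2 * of_nat k * c) - 1/(m3 + 2 * of_nat k * c) - 1/(m4 + 2 * of_nat k * c)) / 4"
definition "hb x = (exp (-(Re m1 * x)) + exp (-(Re m2 * x)) + exp (-(Re m3 * x)) + exp (-(Re m4 * x))) / 4"

lemma E0_expand: "E0 x = (exp (-(m1 * complex_of_real x)) + exp (-(m2 * complex_of_real x))
     - exp (-(m3 * complex_of_real x)) - exp (-(m4 * complex_of_real x))) / 4"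
    unfolding E0_def m1_def m2_def m3_def m4_def
    by (rule sinh_cosh_exp)

lemma E0_Ek: "w x ^ k * E0 x = Ek k x"
proof -
  note E = E0_expand[of x]
  have K: "Ek k x = (w x ^ k * exp (-(m1 * complex_of_real x)) + w x ^ k * exp (-(m2 * complex_of_real x))
     - w x ^ k * exp (-(m3 * complex_of_real x)) - w x ^ k * exp (-(m4 * complex_of_real x))) / 4"
    unfolding Ek_def w_def exp_lin4 by simp
  show ?thesis unfolding K E by (simp add: field_simps)
qed

lemma Ek_int: "(Ek k has_integral Jk k) {0..}"
proof -
  have i: "((\<lambda>x::real. exp (-((m + 2 * of_nat k * c) * of_real x))) has_integral 1/(m + 2 * of_nat k * c)) {0..}"
    if "Re m > 0" for m
    by (rule exp_has_integral_0_inf[OF Re_mk[OF that]])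
  show ?thesis unfolding Ek_def Jk_def
    by (intro has_integral_divide has_integral_diff has_integral_add i Re_m)
qed

lemma hb_int: "hb integrable_on {0..}"
proof -
  have i: "(\<lambda>x::real. exp (-(Re m * x))) integrable_on {0..}" if "Re m > 0" for m
    using integrable_on_exp_minus_to_infinity[of "Re m" 0] that by simp
  have "(\<lambda>x. (exp (-(Re m1 * x)) + exp (-(Re m2 * x)) + exp (-(Re m3 * x)) + exp (-(Re m4 * x))) * (1/4)) integrable_on {0..}"
    by (intro integrable_on_mult_left integrable_add i Re_m)
  then show ?thesis unfolding hb_def by simp
qed

lemma E0_bound: "norm (E0 x) \<le> hb x"
proof -
  have "norm (E0 x) \<le> (norm (exp (-(m1 * of_real x))) + norm (exp (-(m2 * of_real x)))
      + norm (exp (-(m3 * of_real x))) + norm (exp (-(m4 * of_real x)))) / 4"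
    unfolding E0_expand norm_divide by (simp only: norm_numeral) (intro divide_right_mono norm4, simp)
  then show ?thesis unfolding hb_def by (simp add: norm_exp_eq_Re)
qed

lemma norm_w: "x \<ge> 0 \<Longrightarrow> norm (w x) \<le> 1"
  unfolding w_def norm_exp_eq_Re using cpos by simp

lemma Jk_bound: "norm (Jk k) \<le> (1/Re m1 + 1/Re m2 + 1/Re m3 + 1/Re m4) / 4"
proof -
  have b: "norm (1/(m + 2 * of_nat k * c)) \<le> 1/Re m" if "Re m > 0" for m
  proof -
    have "Re m \<le> Re (m + 2 * of_nat k * c)" using cpos by simp
    also have "\<dots> \<le> norm (m + 2 * of_nat k * c)" by (rule complex_Re_le_cmod)
    finally show ?thesis using that by (simp add: norm_divide divide_simps)
  qed
  have "norm (Jk k) = norm (1/(m1 + 2 * of_nat k * c) + 1/(m2 + 2 * of_nat k * c) -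
      1/(m3 + 2 * of_nat k * c) - 1/(m4 + 2 * of_nat k * c)) / 4"
    unfolding Jk_def by (simp only: norm_divide) simp
  also have "\<dots> \<le> (norm (1/(m1 + 2 * of_nat k * c)) + norm (1/(m2 + 2 * of_nat k * c)) +
      norm (1/(m3 + 2 * of_nat k * c)) + norm (1/(m4 + 2 * of_nat k * c))) / 4"
    by (intro divide_right_mono norm4) auto
  also have "\<dots> \<le> (1/Re m1 + 1/Re m2 + 1/Re m3 + 1/Re m4) / 4"
    by (intro divide_right_mono add_mono b Re_m) auto
  finally show ?thesis .
qed

end

context intg begin

definition "JB = (1/Re m1 + 1/Re m2 + 1/Re m3 + 1/Re m4) / 4"

lemma step1:
  assumes r: "0 \<le> r" "r < 1"
  shows "((\<lambda>x. 2 powr v * (1 + of_real r * w x) powr (-v) * E0 x) has_integral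
           (2 powr v * (\<Sum>k. ((-v) gchoose k) * of_real r ^ k * Jk k))) {0..}"
proof -
  define f where "f n x = (\<Sum>k<n. 2 powr v * (((-v) gchoose k) * of_real r ^ k) * Ek k x)" for n x
  define y where "y n = (\<Sum>k<n. 2 powr v * (((-v) gchoose k) * of_real r ^ k) * Jk k)" for n
  define Bs where "Bs = (\<Sum>k. norm ((-v) gchoose k) * r ^ k)"
  have bs: "summable (\<lambda>k. norm ((-v) gchoose k) * r ^ k)" by (rule binom_abs_summable[OF r])
  define h where "h x = (norm ((2::complex) powr v) * Bs) * hb x" for x
  have fi: "(f n has_integral y n) {0..}" for n
    unfolding f_def y_def
    by (intro has_integral_sum has_integral_mult_right Ek_int) auto
  have hi: "h integrable_on {0..}"
    unfolding h_def using integrable_on_cmult_left[OF hb_int, of "norm ((2::complex) powr v) * Bs"] by simp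
  have bnd: "\<forall>x\<in>{0..}. norm (f n x) \<le> h x" for n
  proof
    fix x :: real assume x: "x \<in> {0..}"
    have "norm (f n x) \<le> (\<Sum>k<n. norm (2 powr v * (((-v) gchoose k) * of_real r ^ k) * Ek k x))"
      unfolding f_def by (rule norm_sum)
    also have "\<dots> \<le> (\<Sum>k<n. norm ((2::complex) powr v) * (norm ((-v) gchoose k) * r ^ k) * hb x)"
    proof (rule sum_mono)
      fix k
      have "norm (Ek k x) \<le> hb x"
      proof -
        have "norm (Ek k x) = norm (w x) ^ k * norm (E0 x)"
          unfolding E0_Ek[symmetric] by (simp add: norm_mult norm_power)
        also have "\<dots> \<le> 1 * hb x"
          using norm_w[of x] x E0_bound[of x]
          by (intro mult_mono power_le_one) auto
        finally show ?thesis by simp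
      qed
      then show "norm (2 powr v * (((-v) gchoose k) * of_real r ^ k) * Ek k x)
                 \<le> norm ((2::complex) powr v) * (norm ((-v) gchoose k) * r ^ k) * hb x"
        using r by (simp add: norm_mult norm_power mult_left_mono)
    qed
    also have "\<dots> = norm ((2::complex) powr v) * (\<Sum>k<n. norm ((-v) gchoose k) * r ^ k) * hb x"
      by (simp add: sum_distrib_left sum_distrib_right)
    also have "\<dots> \<le> h x"
      unfolding h_def using sum_le_suminf[OF bs, of "{..<n}"] r E0_bound[of x]
      by (intro mult_right_mono mult_left_mono) (auto simp: Bs_def intro: order.trans[OF norm_ge_zero])
    finally show "norm (f n x) \<le> h x" .
  qed
  have conv: "\<forall>x\<in>{0..}. (\<lambda>n. f n x) \<longlonglongrightarrow> 2 powr v * (1 + of_real r * w x) powr (-v) * E0 x"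
  proof
    fix x :: real assume x: "x \<in> {0..}"
    have "norm (of_real r * w x) < 1"
    proof -
      have "norm (of_real r * w x) = r * norm (w x)" using r by (simp add: norm_mult)
      also have "\<dots> \<le> r * 1" using norm_w[of x] x r by (intro mult_left_mono) auto
      finally show ?thesis using r by simp
    qed
    then have "(\<lambda>k. ((-v) gchoose k) * (of_real r * w x) ^ k) sums (1 + of_real r * w x) powr (-v)"
      by (rule gen_binomial_complex)
    then have "(\<lambda>n. \<Sum>k<n. ((-v) gchoose k) * (of_real r * w x) ^ k) \<longlonglongrightarrow> (1 + of_real r * w x) powr (-v)"
      by (simp add: sums_def)
    then have "(\<lambda>n. 2 powr v * (\<Sum>k<n. ((-v) gchoose k) * (of_real r * w x) ^ k) * E0 x) \<longlonglongrightarrow>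
               2 powr v * (1 + of_real r * w x) powr (-v) * E0 x"
      by (intro tendsto_intros)
    moreover have "2 powr v * (\<Sum>k<n. ((-v) gchoose k) * (of_real r * w x) ^ k) * E0 x = f n x" for n
      unfolding f_def E0_Ek[symmetric]
      by (simp add: sum_distrib_left sum_distrib_right power_mult_distrib mult.assoc mult.left_commute)
    ultimately show "(\<lambda>n. f n x) \<longlonglongrightarrow> 2 powr v * (1 + of_real r * w x) powr (-v) * E0 x" by simp
  qed
  have ylim: "y \<longlonglongrightarrow> 2 powr v * (\<Sum>k. ((-v) gchoose k) * of_real r ^ k * Jk k)"
  proof -
    have "summable (\<lambda>k. norm (((-v) gchoose k) * of_real r ^ k * Jk k))"
    proof (rule summable_comparison_test[OF _ summable_mult2[OF bs, of JB]])
      show "\<exists>N. \<forall>n\<ge>N. norm (norm (((-v) gchoose n) * of_real r ^ n * Jk n)) \<le> norm ((-v) gchoose n) * r ^ n * JB"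
      proof (intro exI[of _ 0] allI impI)
        fix n :: nat
        have "norm (Jk n) \<le> JB" using Jk_bound unfolding JB_def .
        then show "norm (norm (((-v) gchoose n) * of_real r ^ n * Jk n)) \<le> norm ((-v) gchoose n) * r ^ n * JB"
          using r by (simp add: norm_mult norm_power) (intro mult_left_mono, auto)
      qed
    qed
    then have "(\<lambda>k. ((-v) gchoose k) * of_real r ^ k * Jk k) sums (\<Sum>k. ((-v) gchoose k) * of_real r ^ k * Jk k)"
      by (intro summable_sums) (rule summable_norm_cancel)
    then have "(\<lambda>k. 2 powr v * (((-v) gchoose k) * of_real r ^ k * Jk k)) sums (2 powr v * (\<Sum>k. ((-v) gchoose k) * of_real r ^ k * Jk k))"
      by (rule sums_mult)
    then show ?thesis unfolding y_def sums_def by (simp add: mult.assoc)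
  qed
  show ?thesis
    by (rule has_integral_dominated_convergence[OF fi hi bnd conv ylim])
qed

end

context intg begin

lemma norm_rw: "0 \<le> r \<Longrightarrow> norm (of_real r * w x) = r * exp (-2 * Re c * x)"
  by (simp add: norm_mult w_def norm_exp_eq_Re)

lemma w_nonzero: "0 \<le> r \<Longrightarrow> r \<le> 1 \<Longrightarrow> 0 \<le> x \<Longrightarrow> 1 + of_real r * w x \<noteq> 0"
proof
  assume r: "0 \<le> r" "r \<le> 1" and x: "0 \<le> x" and z: "1 + of_real r * w x = 0"
  then have "of_real r * w x = -1" by (simp add: add_eq_0_iff)
  then have n: "r * exp (-2 * Re c * x) = 1"
    using norm_rw[OF r(1), of x] by simp
  show False
  proof (cases "x = 0")
    case True
    then have "complex_of_real (1 + r) = 0" using z by (simp add: w_def)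
    then have "1 + r = 0" by (simp only: of_real_eq_0_iff)
    then show False using r by simp
  next
    case False
    have "x > 0" using x False by simp
    then have "-2 * Re c * x < 0" using cpos by (simp add: mult_pos_pos)
    then have e: "exp (-2 * Re c * x) < 1" by simp
    have "r * exp (-2 * Re c * x) \<le> 1 * exp (-2 * Re c * x)" using r by (intro mult_right_mono) auto
    then show False using n e by linarith
  qed
qed

lemma delta_bound: "\<exists>\<delta>>0. \<forall>r x. 0 \<le> r \<longrightarrow> r \<le> 1 \<longrightarrow> 0 \<le> x \<longrightarrow> \<delta> \<le> norm (1 + of_real r * w x)"
proof -
  define X where "X = 1 / Re c"
  have X: "X > 0" using cpos by (simp add: X_def)
  define K where "K = {0..1::real} \<times> {0..X}"
  define g where "g p = norm (1 + of_real (fst p) * exp (-2 * c * complex_of_real (snd p)))" for p :: "real \<times> real"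
  have "compact K" unfolding K_def by (intro compact_Times compact_Icc)
  moreover have "K \<noteq> {}" using X unfolding K_def by auto
  moreover have "continuous_on K g" unfolding g_def by (intro continuous_intros)
  ultimately obtain p where p: "p \<in> K" "\<forall>q\<in>K. g p \<le> g q"
    using continuous_attains_inf[of K g] by auto
  have gp: "g p > 0"
    using w_nonzero[of "fst p" "snd p"] p(1) unfolding g_def K_def w_def by (auto simp: mem_Times_iff)
  define \<delta> where "\<delta> = min (g p) (1/2)"
  show ?thesis
  proof (intro exI[of _ \<delta>] conjI allI impI)
    show "\<delta> > 0" using gp by (simp add: \<delta>_def)
    fix r x :: real assume r: "0 \<le> r" "r \<le> 1" and x: "0 \<le> x"
    show "\<delta> \<le> norm (1 + of_real r * w x)"
    proof (cases "x \<le> X")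
      case True
      then have "(r, x) \<in> K" using r x by (simp add: K_def)
      then have "g p \<le> g (r, x)" using p by blast
      then show ?thesis by (simp add: \<delta>_def g_def w_def)
    next
      case False
      have "norm (w x) = exp (-2 * Re c * x)" by (simp add: w_def norm_exp_eq_Re)
      also have "\<dots> \<le> exp (-2 * Re c * X)" using False cpos by simp
      also have "-2 * Re c * X = -2" using cpos by (simp add: X_def)
      also have "exp (-2::real) \<le> 1/2"
      proof -
        have "exp (2::real) \<ge> 1 + 2" by (rule exp_ge_add_one_self_aux) simp
        then show ?thesis by (simp add: exp_minus field_simps)
      qed
      finally have nw: "norm (w x) \<le> 1/2" .
      have "norm (of_real r * w x) = r * norm (w x)" using r by (simp add: norm_mult)
      also have "\<dots> \<le> 1 * (1/2)" using nw r by (intro mult_mono) auto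
      finally have "norm (of_real r * w x) \<le> 1/2" by simp
      then have "1/2 \<le> norm (1 + of_real r * w x)"
        using norm_triangle_ineq2[of 1 "- (of_real r * w x)"] by (simp add: norm_minus_commute)
      then show ?thesis by (simp add: \<delta>_def)
    qed
  qed
qed

end

context intg begin

lemma powr_bound: "\<exists>B. \<forall>r x. 0 \<le> r \<longrightarrow> r \<le> 1 \<longrightarrow> 0 \<le> x \<longrightarrow> norm ((1 + of_real r * w x) powr (-v)) \<le> B"
proof -
  obtain \<delta> where d: "\<delta> > 0" "\<forall>r x. 0 \<le> r \<longrightarrow> r \<le> 1 \<longrightarrow> 0 \<le> x \<longrightarrow> \<delta> \<le> norm (1 + of_real r * w x)"
    using delta_bound by blast
  define B where "B = (\<delta> powr (- Re v) + 2 powr (- Re v)) * exp (\<bar>Im v\<bar> * pi)"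
  show ?thesis
  proof (intro exI[of _ B] allI impI)
    fix r x :: real assume r: "0 \<le> r" "r \<le> 1" and x: "0 \<le> x"
    define z where "z = 1 + of_real r * w x"
    have zl: "\<delta> \<le> norm z" using d r x by (simp add: z_def)
    have "norm z \<le> norm (1::complex) + norm (of_real r * w x)" unfolding z_def by (rule norm_triangle_ineq)
    also have "norm (of_real r * w x) \<le> 1 * 1"
      using r norm_w[OF x] unfolding norm_mult by (intro mult_mono) auto
    finally have zu: "norm z \<le> 2" by simp
    have p: "norm z powr (- Re v) \<le> \<delta> powr (- Re v) + 2 powr (- Re v)"
    proof (cases "- Re v \<ge> 0")
      case True
      then have "norm z powr (- Re v) \<le> 2 powr (- Re v)" using zu d zl by (intro powr_mono2) auto
      then show ?thesis using d by (simp add: add_increasing)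
    next
      case False
      then have "norm z powr (- Re v) \<le> \<delta> powr (- Re v)" using zu d zl by (intro powr_mono2') auto
      then show ?thesis using d by (simp add: add_increasing2)
    qed
    have e: "exp (- Im (-v) * Arg z) \<le> exp (\<bar>Im v\<bar> * pi)"
    proof -
      have "Im v * Arg z \<le> \<bar>Im v * Arg z\<bar>" by simp
      also have "\<dots> = \<bar>Im v\<bar> * \<bar>Arg z\<bar>" by (simp add: abs_mult)
      also have "\<dots> \<le> \<bar>Im v\<bar> * pi" using Arg_bounded[of z] by (intro mult_left_mono) auto
      finally show ?thesis by simp
    qed
    have "norm (z powr (-v)) = norm z powr Re (-v) * exp (- Im (-v) * Arg z)" by (rule norm_powr_complex)
    also have "\<dots> \<le> (\<delta> powr (- Re v) + 2 powr (- Re v)) * exp (\<bar>Im v\<bar> * pi)"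
      using p e by (intro mult_mono) auto
    finally show "norm ((1 + of_real r * w x) powr (-v)) \<le> B" by (simp add: B_def z_def)
  qed
qed

end

context intg begin

lemma Re_1w_pos: "0 \<le> x \<Longrightarrow> Re (1 + w x) > 0"
proof (cases "x = 0")
  case True then show ?thesis by (simp add: w_def)
next
  case False
  assume x: "0 \<le> x"
  then have "x > 0" using False by simp
  then have "-2 * Re c * x < 0" using cpos by (simp add: mult_pos_pos)
  then have "norm (w x) < 1" by (simp add: w_def norm_exp_eq_Re)
  moreover have "- Re (w x) \<le> norm (w x)" using abs_Re_le_cmod[of "w x"] by linarith
  ultimately show ?thesis by simp
qed

lemma step2:
  fixes t :: "nat \<Rightarrow> real"
  assumes t: "t \<longlonglongrightarrow> 1" "\<And>n. 0 \<le> t n" "\<And>n. t n < 1"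
    and L: "(\<lambda>n. 2 powr v * (\<Sum>k. ((-v) gchoose k) * of_real (t n) ^ k * Jk k)) \<longlonglongrightarrow> L"
  shows "((\<lambda>x. 2 powr v * (1 + w x) powr (-v) * E0 x) has_integral L) {0..}"
proof -
  obtain B where B: "\<forall>r x. 0 \<le> r \<longrightarrow> r \<le> 1 \<longrightarrow> 0 \<le> x \<longrightarrow> norm ((1 + of_real r * w x) powr (-v)) \<le> B"
    using powr_bound by blast
  have B0: "0 \<le> B" using B[rule_format, of 0 0] norm_ge_zero order.trans by fastforce
  define f where "f n x = 2 powr v * (1 + of_real (t n) * w x) powr (-v) * E0 x" for n x
  define h where "h x = (norm ((2::complex) powr v) * B) * hb x" for x
  have fi: "(f n has_integral (2 powr v * (\<Sum>k. ((-v) gchoose k) * of_real (t n) ^ k * Jk k))) {0..}" for n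
    unfolding f_def using step1[OF t(2,3)] .
  have hi: "h integrable_on {0..}"
    unfolding h_def using integrable_on_cmult_left[OF hb_int, of "norm ((2::complex) powr v) * B"] by simp
  have bnd: "\<forall>x\<in>{0..}. norm (f n x) \<le> h x" for n
  proof
    fix x :: real assume x: "x \<in> {0..}"
    have "norm ((1 + of_real (t n) * w x) powr (-v)) \<le> B" using B t(2,3)[of n] x by (simp add: less_imp_le)
    then show "norm (f n x) \<le> h x"
      unfolding f_def h_def norm_mult using E0_bound[of x]
      by (intro mult_mono mult_left_mono) (use B0 in auto)
  qed
  have conv: "\<forall>x\<in>{0..}. (\<lambda>n. f n x) \<longlonglongrightarrow> 2 powr v * (1 + w x) powr (-v) * E0 x"
  proof
    fix x :: real assume x: "x \<in> {0..}"
    have nz: "1 + w x \<notin> \<real>\<^sub>\<le>\<^sub>0" using Re_1w_pos[of x] x by (auto simp: complex_nonpos_Reals_iff)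
    have "(\<lambda>n. 1 + of_real (t n) * w x) \<longlonglongrightarrow> 1 + of_real 1 * w x"
      by (intro tendsto_intros t)
    then have "(\<lambda>n. (1 + of_real (t n) * w x) powr (-v)) \<longlonglongrightarrow> (1 + w x) powr (-v)"
      using tendsto_powr_complex[OF nz _ tendsto_const[of "-v"]] by simp
    then show "(\<lambda>n. f n x) \<longlonglongrightarrow> 2 powr v * (1 + w x) powr (-v) * E0 x"
      unfolding f_def by (intro tendsto_mult[OF tendsto_mult[OF tendsto_const] tendsto_const])
  qed
  show ?thesis by (rule has_integral_dominated_convergence[OF fi hi bnd conv L])
qed

end


lemma sq_lower:
  fixes m \<alpha> :: complex
  assumes "norm m \<ge> 2 * norm \<alpha>"
  shows "norm (m^2 - \<alpha>^2) \<ge> norm m ^ 2 / 2"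
proof -
  have "norm (m^2) \<le> norm (m^2 - \<alpha>^2) + norm (\<alpha>^2)" using norm_triangle_ineq[of "m^2 - \<alpha>^2" "\<alpha>^2"] by simp
  moreover have "norm \<alpha> ^ 2 \<le> (norm m / 2) ^ 2" using assms by (intro power_mono) auto
  ultimately have "norm m ^ 2 \<le> norm (m^2 - \<alpha>^2) + norm \<alpha> ^ 2" "norm \<alpha> ^ 2 * 4 \<le> norm m ^ 2"
    by (simp_all add: norm_power power_divide)
  then show ?thesis using zero_le_power2[of "norm m"] by linarith
qed

definition Ff :: "complex \<Rightarrow> complex \<Rightarrow> complex \<Rightarrow> complex \<Rightarrow> complex" where
  "Ff \<alpha> \<beta> \<gamma> m = (m^2 - \<gamma>^2) / ((m^2 - \<alpha>^2) * (m^2 - \<beta>^2))"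

definition Hh :: "complex \<Rightarrow> complex \<Rightarrow> complex \<Rightarrow> complex \<Rightarrow> complex" where
  "Hh \<alpha> \<beta> \<gamma> m = m^2 * ((\<alpha>^2 + \<beta>^2 - \<gamma>^2) * m^2 - \<alpha>^2 * \<beta>^2) / ((m^2 - \<alpha>^2) * (m^2 - \<beta>^2))"

lemma Ff_Hh:
  assumes "m \<noteq> 0" "m^2 - \<alpha>^2 \<noteq> 0" "m^2 - \<beta>^2 \<noteq> 0"
  shows "Ff \<alpha> \<beta> \<gamma> m = 1 / m^2 + Hh \<alpha> \<beta> \<gamma> m / m^4"
proof -
  define P where "P = (m^2 - \<alpha>^2) * (m^2 - \<beta>^2)"
  define X where "X = (\<alpha>^2 + \<beta>^2 - \<gamma>^2) * m^2 - \<alpha>^2 * \<beta>^2"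
  have P: "P \<noteq> 0" using assms by (simp add: P_def)
  have m: "m \<noteq> 0" by fact
  have e: "Ff \<alpha> \<beta> \<gamma> m = (m^2 - \<gamma>^2) / P" "Hh \<alpha> \<beta> \<gamma> m = m^2 * X / P"
    unfolding Ff_def Hh_def P_def X_def by simp_all
  have Q: "(m^2 - \<gamma>^2) * m^2 = P + X" unfolding P_def X_def by algebra
  have "1 / m^2 + m^2 * X / P / m^4 = (P + X) / (m^2 * P)"
    using P m by (simp add: field_simps power4_eq_xxxx power2_eq_square)
  also have "\<dots> = (m^2 - \<gamma>^2) / P" unfolding Q[symmetric] using m by simp
  finally show ?thesis unfolding e by simp
qed

lemma Hh_bound:
  assumes m: "norm m \<ge> 1" "norm m \<ge> 2 * norm \<alpha>" "norm m \<ge> 2 * norm \<beta>"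
  shows "norm (Hh \<alpha> \<beta> \<gamma> m) \<le> 4 * (norm (\<alpha>^2 + \<beta>^2 - \<gamma>^2) + norm (\<alpha>^2 * \<beta>^2))"
proof -
  define n where "n = norm m"
  define A1 where "A1 = norm (\<alpha>^2 + \<beta>^2 - \<gamma>^2)"
  define A2 where "A2 = norm (\<alpha>^2 * \<beta>^2)"
  have n1: "n \<ge> 1" using m by (simp add: n_def)
  have d1: "norm (m^2 - \<alpha>^2) \<ge> n^2/2" using sq_lower[OF m(2)] by (simp add: n_def)
  have d2: "norm (m^2 - \<beta>^2) \<ge> n^2/2" using sq_lower[OF m(3)] by (simp add: n_def)
  have den: "norm ((m^2 - \<alpha>^2) * (m^2 - \<beta>^2)) \<ge> n^4/4"
  proof -
    have "n^2/2 * (n^2/2) \<le> norm (m^2 - \<alpha>^2) * norm (m^2 - \<beta>^2)"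
      using d1 d2 by (intro mult_mono) auto
    then show ?thesis by (simp add: norm_mult power4_eq_xxxx power2_eq_square)
  qed
  have num: "norm (m^2 * ((\<alpha>^2 + \<beta>^2 - \<gamma>^2) * m^2 - \<alpha>^2 * \<beta>^2)) \<le> n^4 * (A1 + A2)"
  proof -
    have "norm ((\<alpha>^2 + \<beta>^2 - \<gamma>^2) * m^2 - \<alpha>^2 * \<beta>^2) \<le> A1 * n^2 + A2"
      using norm_triangle_ineq4[of "(\<alpha>^2 + \<beta>^2 - \<gamma>^2) * m^2" "\<alpha>^2 * \<beta>^2"]
      by (simp add: A1_def A2_def n_def norm_mult norm_power)
    also have "\<dots> \<le> A1 * n^2 + A2 * n^2"
    proof -
      have "A2 * 1 \<le> A2 * n^2" using n1 by (intro mult_left_mono) (auto simp: A2_def intro: one_le_power)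
      then show ?thesis by simp
    qed
    finally have "norm ((\<alpha>^2 + \<beta>^2 - \<gamma>^2) * m^2 - \<alpha>^2 * \<beta>^2) \<le> n^2 * (A1 + A2)"
      by (simp add: algebra_simps)
    then have "n^2 * norm ((\<alpha>^2 + \<beta>^2 - \<gamma>^2) * m^2 - \<alpha>^2 * \<beta>^2) \<le> n^2 * (n^2 * (A1 + A2))"
      by (intro mult_left_mono) auto
    then show ?thesis by (simp add: norm_mult norm_power n_def power4_eq_xxxx power2_eq_square mult.assoc)
  qed
  have np: "n^4 > 0" using n1 by simp
  have "norm (Hh \<alpha> \<beta> \<gamma> m) = norm (m^2 * ((\<alpha>^2 + \<beta>^2 - \<gamma>^2) * m^2 - \<alpha>^2 * \<beta>^2)) / norm ((m^2 - \<alpha>^2) * (m^2 - \<beta>^2))"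
    unfolding Hh_def by (simp add: norm_divide)
  also have "\<dots> \<le> (n^4 * (A1 + A2)) / (n^4/4)"
    using num den np by (intro frac_le) (auto simp: A1_def A2_def)
  also have "\<dots> = 4 * (A1 + A2)" using np by (simp add: field_simps)
  finally show ?thesis by (simp add: A1_def A2_def)
qed


definition "AA \<alpha> \<beta> \<gamma> = norm (\<alpha>^2 + \<beta>^2 - \<gamma>^2) + norm (\<alpha>^2 * \<beta>^2)"
definition "KK (\<alpha>::complex) \<beta> = 2 + 2 * norm \<alpha> + 2 * norm \<beta>"

lemma KK_facts: "norm m \<ge> KK \<alpha> \<beta> \<Longrightarrow> norm m \<ge> 2 \<and> norm m \<ge> 2 * norm \<alpha> \<and> norm m \<ge> 2 * norm \<beta>"
  unfolding KK_def using norm_ge_zero[of \<alpha>] norm_ge_zero[of \<beta>] by linarith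

lemma AA_nonneg: "AA \<alpha> \<beta> \<gamma> \<ge> 0" unfolding AA_def by simp

lemma Ff_split:
  assumes "norm m \<ge> KK \<alpha> \<beta>"
  shows "Ff \<alpha> \<beta> \<gamma> m = 1 / m^2 + Hh \<alpha> \<beta> \<gamma> m / m^4"
    and "norm (Hh \<alpha> \<beta> \<gamma> m) \<le> 4 * AA \<alpha> \<beta> \<gamma>"
proof -
  note K = KK_facts[OF assms]
  have m0: "m \<noteq> 0" using K by auto
  have "norm (m^2 - \<alpha>^2) \<ge> norm m ^ 2 / 2" using sq_lower K by blast
  moreover have "norm m ^ 2 / 2 > 0" using m0 by simp
  ultimately have a: "m^2 - \<alpha>^2 \<noteq> 0" by auto
  have "norm (m^2 - \<beta>^2) \<ge> norm m ^ 2 / 2" using sq_lower K by blast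
  then have b: "m^2 - \<beta>^2 \<noteq> 0" using \<open>norm m ^ 2 / 2 > 0\<close> by auto
  show "Ff \<alpha> \<beta> \<gamma> m = 1 / m^2 + Hh \<alpha> \<beta> \<gamma> m / m^4" by (rule Ff_Hh[OF m0 a b])
  show "norm (Hh \<alpha> \<beta> \<gamma> m) \<le> 4 * AA \<alpha> \<beta> \<gamma>" unfolding AA_def using K by (intro Hh_bound) auto
qed

lemma Ff_bound1:
  assumes "norm m \<ge> KK \<alpha> \<beta>"
  shows "norm (Ff \<alpha> \<beta> \<gamma> m) \<le> (1 + 4 * AA \<alpha> \<beta> \<gamma>) / norm m ^ 2"
proof -
  define n where "n = norm m"
  have n1: "n \<ge> 1" using KK_facts[OF assms] by (simp add: n_def)
  have "norm (Ff \<alpha> \<beta> \<gamma> m) \<le> norm (1 / m^2) + norm (Hh \<alpha> \<beta> \<gamma> m / m^4)"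
    unfolding Ff_split(1)[OF assms] by (rule norm_triangle_ineq)
  also have "norm (Hh \<alpha> \<beta> \<gamma> m / m^4) \<le> 4 * AA \<alpha> \<beta> \<gamma> / n^4"
    unfolding norm_divide norm_power n_def[symmetric]
    using Ff_split(2)[OF assms] n1 by (intro divide_right_mono) auto
  also have "4 * AA \<alpha> \<beta> \<gamma> / n^4 \<le> 4 * AA \<alpha> \<beta> \<gamma> / n^2"
    using n1 AA_nonneg[of \<alpha> \<beta> \<gamma>] by (intro divide_left_mono power_increasing) auto
  finally show ?thesis by (simp add: n_def norm_divide norm_power add_divide_distrib)
qed

lemma Ff_bound2:
  assumes "norm m \<ge> KK \<alpha> \<beta> + 1"
  shows "norm (Ff \<alpha> \<beta> \<gamma> m - Ff \<alpha> \<beta> \<gamma> (m + 1)) \<le> (12 + 68 * AA \<alpha> \<beta> \<gamma>) / norm m ^ 3"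
proof -
  define n where "n = norm m"
  define n' where "n' = norm (m + 1)"
  define A where "A = AA \<alpha> \<beta> \<gamma>"
  have A0: "A \<ge> 0" using AA_nonneg by (simp add: A_def)
  have a1: "norm m \<ge> KK \<alpha> \<beta>" using assms by simp
  have K: "n \<ge> 2" using KK_facts[OF a1] by (simp add: n_def)
  have "norm m - norm (1::complex) \<le> norm (m + 1)" by (rule norm_diff_ineq)
  then have "n - 1 \<le> n'" unfolding n_def n'_def by simp
  then have a2: "norm (m+1) \<ge> KK \<alpha> \<beta>" and n'2: "n' \<ge> n / 2" using assms K by (auto simp: n_def n'_def)
  have n0: "n > 0" "n' > 0" using K n'2 by auto
  have m0: "m \<noteq> 0" "m + 1 \<noteq> 0" using n0 by (auto simp: n_def n'_def)
  have eq: "Ff \<alpha> \<beta> \<gamma> m - Ff \<alpha> \<beta> \<gamma> (m + 1) =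
      (2*m+1) / (m^2 * (m+1)^2) + (Hh \<alpha> \<beta> \<gamma> m / m^4 - Hh \<alpha> \<beta> \<gamma> (m+1) / (m+1)^4)"
  proof -
    have d: "1 / m^2 - 1 / (m+1)^2 = (2*m+1) / (m^2 * (m+1)^2)"
      using m0 by (simp add: divide_simps) (simp add: algebra_simps power2_eq_square)
    have "\<And>p q r t :: complex. (p + q) - (r + t) = (p - r) + (q - t)" by simp
    then show ?thesis unfolding Ff_split(1)[OF a1] Ff_split(1)[OF a2] d[symmetric] by simp
  qed
  have t1: "norm ((2*m+1) / (m^2 * (m+1)^2)) \<le> 12 / n^3"
  proof -
    have "norm (2*m+1) \<le> 2 * n + 1" using norm_triangle_ineq[of "2*m" 1] by (simp add: n_def norm_mult)
    also have "\<dots> \<le> 3 * n" using K by simp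
    finally have num: "norm (2*m+1) \<le> 3 * n" .
    have den: "n^2 * (n/2)^2 \<le> n^2 * n'^2" using n'2 n0 by (intro mult_left_mono power_mono) auto
    have "norm ((2*m+1) / (m^2 * (m+1)^2)) = norm (2*m+1) / (n^2 * n'^2)"
      by (simp add: norm_divide norm_mult norm_power n_def n'_def)
    also have "\<dots> \<le> (3 * n) / (n^2 * (n/2)^2)"
      using num den n0 by (intro frac_le) auto
    also have "\<dots> = 12 / n^3" using n0 by (simp add: field_simps power2_eq_square power3_eq_cube)
    finally show ?thesis .
  qed
  have t2: "norm (Hh \<alpha> \<beta> \<gamma> m / m^4) \<le> 4 * A / n^3"
  proof -
    have "norm (Hh \<alpha> \<beta> \<gamma> m / m^4) \<le> 4 * A / n^4"
      unfolding norm_divide norm_power n_def[symmetric] A_def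
      using Ff_split(2)[OF a1] n0 by (intro divide_right_mono) auto
    also have "\<dots> \<le> 4 * A / n^3" using K A0 by (intro divide_left_mono power_increasing) auto
    finally show ?thesis .
  qed
  have t3: "norm (Hh \<alpha> \<beta> \<gamma> (m+1) / (m+1)^4) \<le> 64 * A / n^3"
  proof -
    have "norm (Hh \<alpha> \<beta> \<gamma> (m+1) / (m+1)^4) \<le> 4 * A / n'^4"
      unfolding norm_divide norm_power n'_def[symmetric] A_def
      using Ff_split(2)[OF a2] n0 by (intro divide_right_mono) auto
    also have "\<dots> \<le> 4 * A / (n/2)^4" using n'2 n0 A0 by (intro divide_left_mono power_mono mult_pos_pos) auto
    also have "\<dots> = 64 * A / n^4" by (simp add: field_simps)
    also have "\<dots> \<le> 64 * A / n^3" using K A0 by (intro divide_left_mono power_increasing) auto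
    finally show ?thesis .
  qed
  have "norm (Ff \<alpha> \<beta> \<gamma> m - Ff \<alpha> \<beta> \<gamma> (m + 1)) \<le> norm ((2*m+1) / (m^2 * (m+1)^2)) +
      (norm (Hh \<alpha> \<beta> \<gamma> m / m^4) + norm (Hh \<alpha> \<beta> \<gamma> (m+1) / (m+1)^4))"
    unfolding eq by (intro order.trans[OF norm_triangle_ineq] add_left_mono norm_triangle_ineq4)
  also have "\<dots> \<le> 12 / n^3 + (4 * A / n^3 + 64 * A / n^3)" using t1 t2 t3 by linarith
  also have "\<dots> = (12 + 68 * A) / n^3" by (simp add: add_divide_distrib)
  finally show ?thesis by (simp add: n_def A_def)
qed


lemma npowr_le: fixes n :: real and t :: real
  assumes "n \<ge> 1"
  shows "n powr t \<le> (1 + 2 powr (-t)) * (n+1) powr t"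
proof (cases "t \<ge> 0")
  case True
  have "n powr t \<le> (n+1) powr t" using assms True by (intro powr_mono2) auto
  also have "\<dots> \<le> (1 + 2 powr (-t)) * (n+1) powr t" by (simp add: add_increasing2 mult_le_cancel_right1)
  finally show ?thesis .
next
  case False
  have "n powr t \<le> ((n+1)/2) powr t" using assms False by (intro powr_mono2') auto
  also have "\<dots> = 2 powr (-t) * (n+1) powr t" using assms by (simp add: powr_divide powr_minus divide_simps)
  also have "\<dots> \<le> (1 + 2 powr (-t)) * (n+1) powr t" by (intro mult_right_mono) auto
  finally show ?thesis .
qed

lemma poch_bound:
  fixes v :: complex
  shows "\<exists>M. \<forall>k\<ge>1. norm (pochhammer v k / fact k) \<le> M * real k powr (Re v - 1)"
proof -
  obtain M0 where M0: "\<And>n. norm (rGamma_series v n) \<le> M0"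
    using convergent_imp_bounded[of "rGamma_series v"] rGamma_series_LIMSEQ[of v]
    unfolding bounded_iff convergent_def by auto
  define M where "M = max (norm v) (M0 * (1 + 2 powr (- Re v)))"
  show ?thesis
  proof (intro exI[of _ M] allI impI)
    fix k :: nat assume k: "k \<ge> 1"
    show "norm (pochhammer v k / fact k) \<le> M * real k powr (Re v - 1)"
    proof (cases "k = 1")
      case True then show ?thesis by (simp add: M_def)
    next
      case False
      then obtain n where kn: "k = n + 1" "n \<ge> 1" using k False by (intro that[of "k - 1"]) auto
      have e: "norm (exp (v * of_real (ln (of_nat n)))) = real n powr Re v"
        using kn by (simp add: norm_exp_eq_Re powr_def)
      have "norm (pochhammer v (n+1)) = norm (rGamma_series v n) * (fact n * real n powr Re v)"
        using kn e unfolding rGamma_series_def by (simp add: norm_divide norm_mult)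
      also have "\<dots> \<le> M0 * (fact n * real n powr Re v)"
        by (intro mult_right_mono M0) auto
      finally have p: "norm (pochhammer v (n+1)) \<le> M0 * (fact n * real n powr Re v)" .
      have M00: "M0 \<ge> 0" using M0[of 0] norm_ge_zero order.trans by blast
      have f: "norm (fact k :: complex) = fact n * (real n + 1)" unfolding kn norm_fact by (simp add: algebra_simps)
      have "norm (pochhammer v k / fact k) = norm (pochhammer v (n+1)) / (fact n * (real n + 1))"
        unfolding norm_divide f using kn by simp
      also have "\<dots> \<le> M0 * (fact n * real n powr Re v) / (fact n * (real n + 1))"
        using p by (intro divide_right_mono) auto
      also have "\<dots> = M0 * real n powr Re v / (real n + 1)" by simp
      also have "\<dots> \<le> M0 * ((1 + 2 powr (- Re v)) * (real n + 1) powr Re v) / (real n + 1)"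
        using npowr_le[of "real n" "Re v"] kn M00 by (intro divide_right_mono mult_left_mono) auto
      also have "\<dots> = (M0 * (1 + 2 powr (- Re v))) * ((real n + 1) powr Re v / (real n + 1))" by simp
      also have "(real n + 1) powr Re v / (real n + 1) = real k powr (Re v - 1)"
        using kn by (simp add: powr_diff add.commute)
      also have "(M0 * (1 + 2 powr (- Re v))) * real k powr (Re v - 1) \<le> M * real k powr (Re v - 1)"
        by (intro mult_right_mono) (auto simp: M_def)
      finally show ?thesis .
    qed
  qed
qed


lemma key_rat:
  fixes l a b :: complex
  assumes "l - a - b \<noteq> 0" "l - a + b \<noteq> 0" "l + a - b \<noteq> 0" "l + a + b \<noteq> 0"
  shows "(1/(l - a - b) + 1/(l - a + b) - 1/(l + a - b) - 1/(l + a + b)) / 4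
       = a * (l^2 - a^2 + b^2) / ((l - a - b) * (l - a + b) * (l + a - b) * (l + a + b))"
proof -
  define d1 where "d1 = l - a - b"
  define d2 where "d2 = l - a + b"
  define d3 where "d3 = l + a - b"
  define d4 where "d4 = l + a + b"
  have nz: "d1 \<noteq> 0" "d2 \<noteq> 0" "d3 \<noteq> 0" "d4 \<noteq> 0" using assms by (simp_all add: d1_def d2_def d3_def d4_def)
  have "(1/d1 + 1/d2 - 1/d3 - 1/d4) / 4 = (d2*d3*d4 + d1*d3*d4 - d1*d2*d4 - d1*d2*d3) / (4 * (d1*d2*d3*d4))"
    using nz by (simp add: field_simps)
  also have "d2*d3*d4 + d1*d3*d4 - d1*d2*d4 - d1*d2*d3 = 4 * (a * (l^2 - a^2 + b^2))"
    unfolding d1_def d2_def d3_def d4_def by algebra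
  finally show ?thesis unfolding d1_def[symmetric] d2_def[symmetric] d3_def[symmetric] d4_def[symmetric]
    using nz by simp
qed

lemma poch_ratio:
  fixes z :: complex
  shows "z * pochhammer (1 + z) k = pochhammer z k * (z + of_nat k)"
  using pochhammer_rec[of z k] pochhammer_Suc[of z k] by (simp add: add.commute)

lemma poch_nz: "(z::complex) \<notin> \<int>\<^sub>\<le>\<^sub>0 \<Longrightarrow> pochhammer z k \<noteq> 0"
proof
  assume z: "z \<notin> \<int>\<^sub>\<le>\<^sub>0" and "pochhammer z k = 0"
  then obtain j where j: "z = - of_nat j" by (auto simp: pochhammer_eq_0_iff)
  have "z = of_int (- int j)" unfolding j by simp
  then have "z \<in> \<int>\<^sub>\<le>\<^sub>0" unfolding nonpos_Ints_def by (intro CollectI exI[of _ "- int j"]) auto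
  then show False using z by blast
qed


locale intg2 = intg +
  fixes s :: complex
  assumes v3: "Re v < 3" and ss: "s^2 = a^2 - b^2"
    and n1: "v/2 - s/(2*c) \<notin> \<int>\<^sub>\<le>\<^sub>0" and n2: "v/2 + s/(2*c) \<notin> \<int>\<^sub>\<le>\<^sub>0"
    and n3: "1 + (v/2 - a/(2*c) - b/(2*c)) \<notin> \<int>\<^sub>\<le>\<^sub>0"
    and n4: "1 + (v/2 - a/(2*c) + b/(2*c)) \<notin> \<int>\<^sub>\<le>\<^sub>0"
    and n5: "1 + (v/2 + a/(2*c) + b/(2*c)) \<notin> \<int>\<^sub>\<le>\<^sub>0"
    and n6: "1 + (v/2 + a/(2*c) - b/(2*c)) \<notin> \<int>\<^sub>\<le>\<^sub>0"
begin

definition "sg1 = v/2 - s/(2*c)"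
definition "sg2 = v/2 + s/(2*c)"
definition "sg3 = v/2 - a/(2*c) - b/(2*c)"
definition "sg4 = v/2 - a/(2*c) + b/(2*c)"
definition "sg5 = v/2 + a/(2*c) + b/(2*c)"
definition "sg6 = v/2 + a/(2*c) - b/(2*c)"

definition "tm k = (\<Prod>a\<leftarrow>[v, 1 + sg1, 1 + sg2, sg3, sg4, sg5, sg6]. pochhammer a k) /
     (\<Prod>b\<leftarrow>[sg1, sg2, 1 + sg3, 1 + sg4, 1 + sg5, 1 + sg6]. pochhammer b k) * (-1) ^ k / fact k"
definition "pk k = pochhammer v k / fact k"
definition "Rk k = (sg1 + of_nat k) * (sg2 + of_nat k) / (sg1 * sg2) * (sg3 / (sg3 + of_nat k))
     * (sg4 / (sg4 + of_nat k)) * (sg5 / (sg5 + of_nat k)) * (sg6 / (sg6 + of_nat k))"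
definition "PP = (v * c - a - b) * (v * c + a + b) * (v * c - a + b) * (v * c + a - b)"
definition "NP = (v^2 * a * c^2 - a^3 + a * b^2) / PP"

lemma c0: "c \<noteq> 0" using cpos by auto

lemma sg_m: "sg3 + of_nat k = (m1 + 2 * of_nat k * c) / (2*c)"
  "sg4 + of_nat k = (m2 + 2 * of_nat k * c) / (2*c)"
  "sg5 + of_nat k = (m4 + 2 * of_nat k * c) / (2*c)"
  "sg6 + of_nat k = (m3 + 2 * of_nat k * c) / (2*c)"
  using c0 by (simp_all add: sg3_def sg4_def sg5_def sg6_def m1_def m2_def m3_def m4_def field_simps)

lemma mk_nz: "m1 + 2 * of_nat k * c \<noteq> 0" "m2 + 2 * of_nat k * c \<noteq> 0"
   "m3 + 2 * of_nat k * c \<noteq> 0" "m4 + 2 * of_nat k * c \<noteq> 0"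
proof -
  have nz: "\<And>z::complex. Re z > 0 \<Longrightarrow> z \<noteq> 0" by auto
  show "m1 + 2 * of_nat k * c \<noteq> 0" "m2 + 2 * of_nat k * c \<noteq> 0"
   "m3 + 2 * of_nat k * c \<noteq> 0" "m4 + 2 * of_nat k * c \<noteq> 0"
    by (intro nz Re_mk Re_m)+
qed

lemma sgk_nz: "sg3 + of_nat k \<noteq> 0" "sg4 + of_nat k \<noteq> 0" "sg5 + of_nat k \<noteq> 0" "sg6 + of_nat k \<noteq> 0"
  unfolding sg_m using mk_nz c0 by auto

lemma sg12_nz: "sg1 \<noteq> 0" "sg2 \<noteq> 0"
  using n1 n2 unfolding sg1_def sg2_def by auto

lemma tm_eq: "tm k = (-1)^k * pk k * Rk k"
proof -
  have r1: "pochhammer (1 + z) k / pochhammer z k = (z + of_nat k) / z" if "z \<noteq> 0" "z \<notin> \<int>\<^sub>\<le>\<^sub>0" for z :: complex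
    using poch_ratio[of z k] poch_nz[OF that(2), of k] that(1) by (simp add: field_simps)
  have r2: "pochhammer z k / pochhammer (1 + z) k = z / (z + of_nat k)" if "z + of_nat k \<noteq> 0" "1 + z \<notin> \<int>\<^sub>\<le>\<^sub>0" for z :: complex
    using poch_ratio[of z k] poch_nz[OF that(2), of k] that(1) by (simp add: field_simps)
  have split: "tm k = pochhammer v k * (pochhammer (1 + sg1) k / pochhammer sg1 k) * (pochhammer (1 + sg2) k / pochhammer sg2 k)
      * (pochhammer sg3 k / pochhammer (1 + sg3) k) * (pochhammer sg4 k / pochhammer (1 + sg4) k)
      * (pochhammer sg5 k / pochhammer (1 + sg5) k) * (pochhammer sg6 k / pochhammer (1 + sg6) k) * (-1)^k / fact k"
    unfolding tm_def by (simp add: divide_inverse inverse_mult_distrib mult_ac)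
  show ?thesis
    unfolding split
    using r1[OF sg12_nz(1) n1[folded sg1_def]] r1[OF sg12_nz(2) n2[folded sg2_def]]
      r2[OF sgk_nz(1) n3[folded sg3_def]] r2[OF sgk_nz(2) n4[folded sg4_def]]
      r2[OF sgk_nz(3) n5[folded sg5_def]] r2[OF sgk_nz(4) n6[folded sg6_def]]
    by (simp add: pk_def Rk_def mult_ac)
qed

end

lemma div_div_cancel: "z \<noteq> 0 \<Longrightarrow> (x/z)/(y/z) = x/(y::complex)"
  by (cases "y = 0") (simp_all add: field_simps)

lemma cancel_gen: "x \<noteq> 0 \<Longrightarrow> p \<noteq> 0 \<Longrightarrow> a * x / p * (y / x * p / d) = a * y / (d::complex)"
  by (cases "d = 0") (simp_all add: field_simps)

context intg2 begin

lemma Jk_eq: "Jk k = NP * Rk k"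
proof -
  define K where "K = (of_nat k :: complex)"
  define l where "l = v * c + 2 * K * c"
  have e1: "m1 + 2 * K * c = l - a - b" "m2 + 2 * K * c = l - a + b"
    "m3 + 2 * K * c = l + a - b" "m4 + 2 * K * c = l + a + b"
    unfolding l_def m1_def m2_def m3_def m4_def by (simp_all add: algebra_simps)
  have nz: "l - a - b \<noteq> 0" "l - a + b \<noteq> 0" "l + a - b \<noteq> 0" "l + a + b \<noteq> 0"
    using mk_nz[of k] unfolding e1[unfolded K_def] by auto
  have J: "Jk k = a * (l^2 - a^2 + b^2) / ((l - a - b) * (l - a + b) * (l + a - b) * (l + a + b))"
    unfolding Jk_def K_def[symmetric] e1 by (rule key_rat[OF nz])
  have q: "sg3 / (sg3 + K) = m1 / (m1 + 2*K*c)" "sg4 / (sg4 + K) = m2 / (m2 + 2*K*c)"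
     "sg5 / (sg5 + K) = m4 / (m4 + 2*K*c)" "sg6 / (sg6 + K) = m3 / (m3 + 2*K*c)"
  proof -
    have dc: "\<And>x y z::complex. z \<noteq> 0 \<Longrightarrow> (x/z)/(y/z) = x/y"
      by (case_tac "y = 0") (simp_all add: field_simps)
    have gl: "(m/(2*c))/(m/(2*c) + K) = m/(m + 2*K*c)" for m
    proof -
      have "m/(2*c) + K = (m + 2*K*c)/(2*c)" using c0 by (simp add: field_simps)
      then show ?thesis using dc[of "2*c" m "m + 2*K*c"] c0 by simp
    qed
    have s0: "sg3 = m1/(2*c)" "sg4 = m2/(2*c)" "sg5 = m4/(2*c)" "sg6 = m3/(2*c)"
      using sg_m[of 0] by simp_all
    have z: "2*c \<noteq> 0" using c0 by simp
    show "sg3 / (sg3 + K) = m1 / (m1 + 2*K*c)" "sg4 / (sg4 + K) = m2 / (m2 + 2*K*c)"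
     "sg5 / (sg5 + K) = m4 / (m4 + 2*K*c)" "sg6 / (sg6 + K) = m3 / (m3 + 2*K*c)"
      unfolding s0 gl by (rule refl)+
  qed
  have p1: "(sg1 + K) * (sg2 + K) = (l^2 - s^2) / (4 * c^2)"
    using c0 unfolding sg1_def sg2_def l_def by (simp add: field_simps power2_eq_square)
  have p2: "sg1 * sg2 = ((v * c)^2 - s^2) / (4 * c^2)"
    using c0 unfolding sg1_def sg2_def by (simp add: field_simps power2_eq_square)
  have d0: "(v * c)^2 - s^2 \<noteq> 0" using p2 sg12_nz c0 by auto
  have PPm: "PP = m1 * m4 * m2 * m3" unfolding PP_def m1_def m2_def m3_def m4_def by simp
  have PP0: "PP \<noteq> 0" using Re_m unfolding PPm by auto
  have R: "Rk k = (l^2 - s^2) / ((v * c)^2 - s^2) * (m1 * m2 * m3 * m4) / ((l - a - b) * (l - a + b) * (l + a - b) * (l + a + b))"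
  proof -
    have "Rk k = ((sg1 + K) * (sg2 + K) / (sg1 * sg2)) * (m1 / (m1 + 2*K*c)) * (m2 / (m2 + 2*K*c)) * (m4 / (m4 + 2*K*c)) * (m3 / (m3 + 2*K*c))"
      unfolding Rk_def K_def[symmetric] q by simp
    also have "(sg1 + K) * (sg2 + K) / (sg1 * sg2) = (l^2 - s^2) / ((v * c)^2 - s^2)"
      unfolding p1 p2 by (rule div_div_cancel) (use c0 in simp)
    finally show ?thesis unfolding e1 by (simp add: divide_inverse inverse_mult_distrib mult_ac)
  qed
  have N: "v^2 * a * c^2 - a^3 + a * b^2 = a * ((v * c)^2 - s^2)"
    using ss by algebra
  have "NP * Rk k = a * ((v * c)^2 - s^2) / PP * ((l^2 - s^2) / ((v * c)^2 - s^2) * PP / ((l - a - b) * (l - a + b) * (l + a - b) * (l + a + b)))"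
    unfolding NP_def N R PPm by (simp add: mult_ac)
  also have "\<dots> = a * (l^2 - s^2) / ((l - a - b) * (l - a + b) * (l + a - b) * (l + a + b))"
    by (rule cancel_gen[OF d0 PP0])
  also have "l^2 - s^2 = l^2 - a^2 + b^2" using ss by simp
  finally show ?thesis using J by simp
qed

lemma binom_J: "((-v) gchoose k) * Jk k = NP * tm k"
  unfolding Jk_eq tm_eq gbinomial_pochhammer pk_def by simp

end

context intg2 begin

definition "al = a/(2*c) + b/(2*c)"
definition "be = a/(2*c) - b/(2*c)"
definition "ga = s/(2*c)"
definition "C0 = sg3 * sg4 * sg5 * sg6 / (sg1 * sg2)"

lemma Rk_Ff: "Rk k = C0 * Ff al be ga (of_nat k + v/2)"
proof -
  define K where "K = (of_nat k :: complex)"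
  define m where "m = K + v/2"
  have e1: "(sg1 + K) * (sg2 + K) = m^2 - ga^2" unfolding sg1_def sg2_def ga_def m_def by (simp add: power2_eq_square algebra_simps add_divide_distrib)
  have e2: "(sg3 + K) * (sg5 + K) = m^2 - al^2" unfolding sg3_def sg5_def al_def m_def by (simp add: power2_eq_square algebra_simps add_divide_distrib)
  have e3: "(sg4 + K) * (sg6 + K) = m^2 - be^2" unfolding sg4_def sg6_def be_def m_def by (simp add: power2_eq_square algebra_simps add_divide_distrib)
  have "Rk k = C0 * (((sg1 + K) * (sg2 + K)) / (((sg3 + K) * (sg5 + K)) * ((sg4 + K) * (sg6 + K))))"
    unfolding Rk_def C0_def K_def by (simp add: divide_inverse inverse_mult_distrib mult_ac)
  also have "\<dots> = C0 * Ff al be ga m" unfolding e1 e2 e3 Ff_def by simp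
  finally show ?thesis by (simp add: m_def K_def)
qed

definition "Dk k = Rk k - (v + of_nat k) / (of_nat k + 1) * Rk (Suc k)"

lemma Dk_eq: "Dk k = C0 * (Ff al be ga (of_nat k + v/2) - Ff al be ga (of_nat k + v/2 + 1))
   + C0 * ((1 - v) / (of_nat k + 1)) * Ff al be ga (of_nat k + v/2 + 1)"
proof -
  have s: "of_nat (Suc k) + v/2 = of_nat k + v/2 + 1" by simp
  have q: "(v + of_nat k) / (of_nat k + 1) = 1 - (1 - v) / (of_nat k + 1 :: complex)"
  proof -
    have "(of_nat k + 1 :: complex) \<noteq> 0" by (metis of_nat_Suc of_nat_eq_0_iff add.commute nat.distinct(1))
    then show ?thesis by (simp add: field_simps)
  qed
  show ?thesis unfolding Dk_def Rk_Ff s q by (simp add: algebra_simps)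
qed

lemma pk_Suc: "pk (Suc k) = pk k * ((v + of_nat k) / (of_nat k + 1))"
  unfolding pk_def by (simp add: pochhammer_Suc field_simps)

lemma pair_eq: "tm (2*j) + tm (2*j+1) = pk (2*j) * Dk (2*j)"
proof -
  have "tm (2*j+1) = - (pk (2*j) * ((v + of_nat (2*j)) / (of_nat (2*j) + 1)) * Rk (Suc (2*j)))"
    unfolding tm_eq using pk_Suc[of "2*j"] by simp
  moreover have "tm (2*j) = pk (2*j) * Rk (2*j)" unfolding tm_eq by simp
  ultimately show ?thesis unfolding Dk_def by (simp add: algebra_simps)
qed

end


lemma div_pow_mono: "0 \<le> (X::real) \<Longrightarrow> 0 < h \<Longrightarrow> h \<le> n \<Longrightarrow> X / n ^ p \<le> X / h ^ p"
  by (intro divide_left_mono power_mono mult_pos_pos zero_less_power) auto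

context intg2 begin

definition "A0 = AA al be ga"
definition "KQ = KK al be"
definition "k1 = nat \<lceil>2 * KQ + 2 + norm v\<rceil>"
definition "CR = 4 * norm C0 * (1 + 4 * A0)"
definition "CD = norm C0 * (8 * (12 + 68 * A0) + 4 * norm (1 - v) * (1 + 4 * A0))"

lemma A0_nonneg: "A0 \<ge> 0" unfolding A0_def by (rule AA_nonneg)

lemma k1_facts:
  assumes "k \<ge> k1"
  shows "norm (of_nat k + v/2) \<ge> real k / 2" "norm (of_nat k + v/2) \<ge> KQ + 1"
    "norm (of_nat k + v/2 + 1) \<ge> real k / 2" "norm (of_nat k + v/2 + 1) \<ge> KQ" "real k \<ge> 2"
proof -
  have kk: "real k \<ge> 2 * KQ + 2 + norm v" using assms unfolding k1_def by linarith
  have KQ2: "KQ \<ge> 2" unfolding KQ_def KK_def by simp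
  have l1: "norm (of_nat k + v/2) \<ge> real k - norm v / 2"
    using norm_diff_ineq[of "of_nat k :: complex" "v/2"] by (simp add: norm_divide)
  have l2': "norm (of_nat (Suc k) + v/2) \<ge> real (Suc k) - norm v / 2"
    using norm_diff_ineq[of "of_nat (Suc k) :: complex" "v/2"] by (simp only: norm_of_nat norm_divide) simp
  have "of_nat (Suc k) + v/2 = of_nat k + v/2 + (1::complex)" by simp
  have l2: "norm (of_nat k + v/2 + 1) \<ge> real k + 1 - norm v / 2" using l2' by (simp add: ac_simps)
  show "norm (of_nat k + v/2) \<ge> real k / 2" "norm (of_nat k + v/2) \<ge> KQ + 1"
    "norm (of_nat k + v/2 + 1) \<ge> real k / 2" "norm (of_nat k + v/2 + 1) \<ge> KQ" "real k \<ge> 2"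
    using l1 l2 kk KQ2 norm_ge_zero[of v] by linarith+
qed

lemma R_bound:
  assumes "k \<ge> k1"
  shows "norm (Rk k) \<le> CR / real k ^ 2"
proof -
  note f = k1_facts[OF assms]
  have "norm (Rk k) = norm C0 * norm (Ff al be ga (of_nat k + v/2))" unfolding Rk_Ff norm_mult ..
  also have "\<dots> \<le> norm C0 * ((1 + 4 * A0) / (real k / 2) ^ 2)"
  proof (intro mult_left_mono)
    have "norm (Ff al be ga (of_nat k + v/2)) \<le> (1 + 4 * A0) / norm (of_nat k + v/2) ^ 2"
      using Ff_bound1[of al be "of_nat k + v/2" ga] f by (auto simp: A0_def KQ_def)
    also have "\<dots> \<le> (1 + 4 * A0) / (real k / 2) ^ 2"
      using f A0_nonneg by (intro div_pow_mono) auto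
    finally show "norm (Ff al be ga (of_nat k + v/2)) \<le> (1 + 4 * A0) / (real k / 2) ^ 2" .
  qed simp
  also have "\<dots> = CR / real k ^ 2" by (simp add: CR_def power_divide)
  finally show ?thesis .
qed

lemma D_bound:
  assumes "k \<ge> k1"
  shows "norm (Dk k) \<le> CD / real k ^ 3"
proof -
  note f = k1_facts[OF assms]
  have kp: "real k > 0" using f by simp
  define m where "m = of_nat k + v/2"
  have t1: "norm (C0 * (Ff al be ga m - Ff al be ga (m + 1))) \<le> norm C0 * (8 * (12 + 68 * A0) / real k ^ 3)"
  proof -
    have "norm (Ff al be ga m - Ff al be ga (m + 1)) \<le> (12 + 68 * A0) / norm m ^ 3"
      using Ff_bound2[of al be m ga] f by (simp add: A0_def KQ_def m_def)
    also have "\<dots> \<le> (12 + 68 * A0) / (real k / 2) ^ 3"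
      using f A0_nonneg by (intro div_pow_mono) (auto simp: m_def)
    also have "\<dots> = 8 * (12 + 68 * A0) / real k ^ 3" by (simp add: power_divide)
    finally show ?thesis unfolding norm_mult by (intro mult_left_mono) auto
  qed
  have t2: "norm (C0 * ((1 - v) / (of_nat k + 1)) * Ff al be ga (m + 1)) \<le> norm C0 * (4 * norm (1 - v) * (1 + 4 * A0) / real k ^ 3)"
  proof -
    have a: "norm ((1 - v) / (of_nat k + 1)) \<le> norm (1 - v) / real k"
    proof -
      have "norm (of_nat k + 1 :: complex) = real k + 1" by (metis norm_of_nat of_nat_Suc add.commute)
      then show ?thesis unfolding norm_divide using kp by (intro divide_left_mono) auto
    qed
    have "norm (Ff al be ga (m + 1)) \<le> (1 + 4 * A0) / norm (m + 1) ^ 2"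
      using Ff_bound1[of al be "m + 1" ga] f by (simp add: A0_def KQ_def m_def)
    also have "\<dots> \<le> (1 + 4 * A0) / (real k / 2) ^ 2"
      using f A0_nonneg by (intro div_pow_mono) (auto simp: m_def)
    finally have b: "norm (Ff al be ga (m + 1)) \<le> 4 * (1 + 4 * A0) / real k ^ 2" by (simp add: power_divide)
    have "norm ((1 - v) / (of_nat k + 1)) * norm (Ff al be ga (m + 1)) \<le> (norm (1 - v) / real k) * (4 * (1 + 4 * A0) / real k ^ 2)"
      using a b by (intro mult_mono) auto
    also have "\<dots> = 4 * norm (1 - v) * (1 + 4 * A0) / real k ^ 3" using kp by (simp add: field_simps power3_eq_cube power2_eq_square)
    finally have c: "norm ((1 - v) / (of_nat k + 1)) * norm (Ff al be ga (m + 1)) \<le> 4 * norm (1 - v) * (1 + 4 * A0) / real k ^ 3" .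
    have "norm (C0 * ((1 - v) / (of_nat k + 1)) * Ff al be ga (m + 1)) = norm C0 * (norm ((1 - v) / (of_nat k + 1)) * norm (Ff al be ga (m + 1)))"
      by (simp only: norm_mult mult.assoc)
    also have "\<dots> \<le> norm C0 * (4 * norm (1 - v) * (1 + 4 * A0) / real k ^ 3)"
      using c by (intro mult_left_mono) auto
    finally show ?thesis .
  qed
  have "norm (Dk k) \<le> norm (C0 * (Ff al be ga m - Ff al be ga (m + 1))) + norm (C0 * ((1 - v) / (of_nat k + 1)) * Ff al be ga (m + 1))"
    unfolding Dk_eq m_def[symmetric] by (rule norm_triangle_ineq)
  also have "\<dots> \<le> norm C0 * (8 * (12 + 68 * A0) / real k ^ 3) + norm C0 * (4 * norm (1 - v) * (1 + 4 * A0) / real k ^ 3)"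
    using t1 t2 by linarith
  also have "\<dots> = CD / real k ^ 3" unfolding CD_def by (simp add: add_divide_distrib[symmetric] times_divide_eq_right[symmetric] algebra_simps)
  finally show ?thesis .
qed

end


lemma pairs_sums:
  fixes a :: "nat \<Rightarrow> complex"
  assumes b: "(\<lambda>j. a (2*j) + a (2*j+1)) sums S" and a0: "a \<longlonglongrightarrow> 0"
  shows "a sums S"
proof -
  define P where "P n = (\<Sum>i<n. a i)" for n
  have P2: "P (2*j) = (\<Sum>i<j. a (2*i) + a (2*i+1))" for j
    by (induction j) (simp_all add: P_def)
  have PS: "(\<lambda>j. P (2*j)) \<longlonglongrightarrow> S" using b unfolding sums_def P2 .
  show ?thesis unfolding sums_def P_def[symmetric]
  proof (rule LIMSEQ_I)
    fix e :: real assume e: "e > 0"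
    obtain J1 where J1: "\<forall>j\<ge>J1. norm (P (2*j) - S) < e/2" using LIMSEQ_D[OF PS, of "e/2"] e by auto
    obtain J2 where J2: "\<forall>n\<ge>J2. norm (a n - 0) < e/2" using LIMSEQ_D[OF a0, of "e/2"] e by auto
    show "\<exists>no. \<forall>n\<ge>no. norm (P n - S) < e"
    proof (intro exI allI impI)
      fix n assume n: "2 * J1 + J2 + 1 \<le> n"
      define j where "j = n div 2"
      have j: "j \<ge> J1" using n by (simp add: j_def)
      show "norm (P n - S) < e"
      proof (cases "even n")
        case True
        then have "n = 2*j" by (simp add: j_def)
        then show ?thesis using J1 j e by auto
      next
        case False
        then have nj: "n = 2*j + 1" by (simp add: j_def)
        have "P n - S = (P (2*j) - S) + a (2*j)" unfolding nj by (simp add: P_def)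
        then have "norm (P n - S) \<le> norm (P (2*j) - S) + norm (a (2*j))"
          by (simp only: norm_triangle_ineq)
        moreover have "2*j \<ge> J2" using n nj by linarith
        moreover have "norm (a (2*j)) < e/2" using J2 \<open>2*j \<ge> J2\<close> by auto
        ultimately show ?thesis using J1 j by fastforce
      qed
    qed
  qed
qed


context intg2 begin

lemma tm_conv: "tm sums (\<Sum>j. tm (2*j) + tm (2*j+1))" and tm_zero: "tm \<longlonglongrightarrow> 0"
proof -
  obtain Mp where Mp: "\<forall>k\<ge>1. norm (pk k) \<le> Mp * real k powr (Re v - 1)"
    using poch_bound[of v] unfolding pk_def by blast
  define N0 where "N0 = max k1 1"
  have Mp0: "Mp \<ge> 0"
  proof -
    have "norm (pk 1) \<le> Mp * real 1 powr (Re v - 1)" using Mp[rule_format, of 1] by simp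
    then have "0 \<le> Mp * real 1 powr (Re v - 1)" using order.trans[OF norm_ge_zero] by blast
    then show ?thesis by simp
  qed
  have CR0: "CR \<ge> 0" unfolding CR_def using A0_nonneg by simp
  have CD0: "CD \<ge> 0" unfolding CD_def using A0_nonneg by simp
  have tb: "norm (tm k) \<le> Mp * CR * real k powr (Re v - 3)" if k: "k \<ge> N0" for k
  proof -
    have k1: "k \<ge> k1" "k \<ge> 1" using k by (auto simp: N0_def)
    have kp: "real k > 0" using k1 by simp
    have "norm (tm k) = norm (pk k) * norm (Rk k)" unfolding tm_eq by (simp add: norm_mult norm_power)
    also have "\<dots> \<le> (Mp * real k powr (Re v - 1)) * (CR / real k ^ 2)"
      using Mp k1 R_bound[OF k1(1)] Mp0 by (intro mult_mono) auto
    also have "real k ^ 2 = real k powr 2" using kp by (simp add: powr_realpow)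
    also have "(Mp * real k powr (Re v - 1)) * (CR / real k powr 2) = Mp * CR * (real k powr (Re v - 1) / real k powr 2)"
      by simp
    also have "real k powr (Re v - 1) / real k powr 2 = real k powr (Re v - 3)"
    proof -
      have e: "Re v - 3 = (Re v - 1) - 2" by simp
      show ?thesis unfolding e by (rule powr_diff[symmetric])
    qed
    finally show ?thesis .
  qed
  have lim0: "(\<lambda>k. Mp * CR * real k powr (Re v - 3)) \<longlonglongrightarrow> 0"
  proof -
    have "(\<lambda>k. real k powr (Re v - 3)) \<longlonglongrightarrow> 0"
      using v3 by (intro tendsto_neg_powr filterlim_real_sequentially) auto
    from tendsto_mult[OF tendsto_const[of "Mp * CR"] this] show ?thesis by simp
  qed
  show tz: "tm \<longlonglongrightarrow> 0"
    by (rule Lim_null_comparison[OF _ lim0]) (use tb in \<open>auto simp: eventually_sequentially\<close>)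
  have bb: "norm (tm (2*j) + tm (2*j+1)) \<le> Mp * CD * 2 powr (Re v - 4) * real j powr (Re v - 4)" if j: "j \<ge> N0" for j
  proof -
    have k1: "2*j \<ge> k1" "2*j \<ge> 1" using j by (auto simp: N0_def)
    have kp: "real (2*j) > 0" using k1 by simp
    have "norm (tm (2*j) + tm (2*j+1)) = norm (pk (2*j)) * norm (Dk (2*j))" unfolding pair_eq by (simp add: norm_mult)
    also have "\<dots> \<le> (Mp * real (2*j) powr (Re v - 1)) * (CD / real (2*j) ^ 3)"
      using Mp[rule_format, of "2*j"] k1 D_bound[OF k1(1)] Mp0 by (intro mult_mono) auto
    also have "real (2*j) ^ 3 = real (2*j) powr 3" using kp by (simp add: powr_realpow)
    also have "(Mp * real (2*j) powr (Re v - 1)) * (CD / real (2*j) powr 3) = Mp * CD * (real (2*j) powr (Re v - 1) / real (2*j) powr 3)"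
      by simp
    also have "real (2*j) powr (Re v - 1) / real (2*j) powr 3 = real (2*j) powr (Re v - 4)"
    proof -
      have e: "Re v - 4 = (Re v - 1) - 3" by simp
      show ?thesis unfolding e by (rule powr_diff[symmetric])
    qed
    also have "real (2*j) powr (Re v - 4) = 2 powr (Re v - 4) * real j powr (Re v - 4)"
      by (simp add: powr_mult)
    finally show ?thesis by (simp add: mult_ac)
  qed
  have "summable (\<lambda>j. Mp * CD * 2 powr (Re v - 4) * real j powr (Re v - 4))"
    using v3 by (intro summable_mult) (simp add: summable_real_powr_iff)
  then have sb: "summable (\<lambda>j. tm (2*j) + tm (2*j+1))"
    by (rule summable_comparison_test'[where N=N0]) (use bb in auto)
  show "tm sums (\<Sum>j. tm (2*j) + tm (2*j+1))"
    by (rule pairs_sums[OF summable_sums[OF sb] tz])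
qed

end

context intg2 begin

lemma series_r:
  assumes r: "0 \<le> r" "r < 1"
  shows "(\<Sum>k. ((-v) gchoose k) * of_real r ^ k * Jk k) = NP * (\<Sum>k. tm k * of_real r ^ k)"
proof -
  obtain M where M: "\<forall>k. norm (tm k) \<le> M"
    using convergent_imp_bounded[of tm] tm_zero unfolding bounded_iff convergent_def by auto
  have "summable (\<lambda>k. norm (tm k * of_real r ^ k))" using abel_aux(1)[of 0 tm M M r] M r by simp
  then have sm: "summable (\<lambda>k. tm k * of_real r ^ k)" by (rule summable_norm_cancel)
  have "(\<lambda>k. ((-v) gchoose k) * of_real r ^ k * Jk k) = (\<lambda>k. NP * (tm k * of_real r ^ k))"
  proof
    fix k
    have "((-v) gchoose k) * of_real r ^ k * Jk k = (((-v) gchoose k) * Jk k) * of_real r ^ k" by (simp add: mult_ac)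
    also have "\<dots> = NP * (tm k * of_real r ^ k)" unfolding binom_J by (simp add: mult_ac)
    finally show "((-v) gchoose k) * of_real r ^ k * Jk k = NP * (tm k * of_real r ^ k)" .
  qed
  then show ?thesis using suminf_mult[OF sm, of NP] by simp
qed

lemma main_loc:
  "((\<lambda>x. 2 powr v * (1 + w x) powr (-v) * E0 x) has_integral (2 powr v * (NP * suminf tm))) {0..}"
proof -
  define t where "t n = 1 - 1 / (real n + 2)" for n
  have t1: "t \<longlonglongrightarrow> 1"
  proof -
    have "(\<lambda>n. 1 / (real n + 2)) \<longlonglongrightarrow> 0"
    proof -
      have "(\<lambda>n. 1 / (real (n + 2))) \<longlonglongrightarrow> 0"
        using LIMSEQ_ignore_initial_segment[OF lim_const_over_n[of 1], of 2] by simp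
      then show ?thesis by (simp add: add_ac)
    qed
    from tendsto_diff[OF tendsto_const[of 1] this] show ?thesis by (simp add: t_def[abs_def])
  qed
  have t2: "0 \<le> t n" "t n < 1" for n by (auto simp: t_def field_simps)
  have ts: "tm sums suminf tm" using tm_conv sums_iff by blast
  have "(\<lambda>n. \<Sum>k. tm k * of_real (t n) ^ k) \<longlonglongrightarrow> suminf tm"
    by (rule abel_seq[OF ts t1 t2])
  then have "(\<lambda>n. 2 powr v * (NP * (\<Sum>k. tm k * of_real (t n) ^ k))) \<longlonglongrightarrow> 2 powr v * (NP * suminf tm)"
    by (intro tendsto_mult tendsto_const)
  moreover have "2 powr v * (NP * (\<Sum>k. tm k * of_real (t n) ^ k)) = 2 powr v * (\<Sum>k. ((-v) gchoose k) * of_real (t n) ^ k * Jk k)" for n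
    using series_r[OF t2(1,2)[of n]] by simp
  ultimately have L: "(\<lambda>n. 2 powr v * (\<Sum>k. ((-v) gchoose k) * of_real (t n) ^ k * Jk k)) \<longlonglongrightarrow> 2 powr v * (NP * suminf tm)"
    by simp
  show ?thesis by (rule step2[OF t1 t2 L])
qed

end


lemma integrand_eq:
  "sinh (a * complex_of_real x) * cosh (b * complex_of_real x) / cosh_pow v c x =
   2 powr v * (1 + exp (-2 * c * complex_of_real x)) powr (-v) *
   (exp (-(v * c * complex_of_real x)) * (sinh (a * complex_of_real x) * cosh (b * complex_of_real x)))"
proof -
  have n2: "(2::complex) powr v \<noteq> 0" by simp
  show ?thesis unfolding cosh_pow_def powr_minus exp_minus
    using n2 by (simp add: divide_inverse inverse_mult_distrib mult_ac)
qed

theorem mainTheorem15: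
  fixes v a b c s :: complex
  assumes "Re v < 3" and "Re c > 0"
    and "Re (v * c + a + b) > 0" and "Re (v * c + a - b) > 0"
    and "Re (v * c - a + b) > 0" and "Re (v * c - a - b) > 0"
    and "s ^ 2 = a ^ 2 - b ^ 2"
    and "v/2 - s/(2*c) \<notin> \<int>\<^sub>\<le>\<^sub>0" and "v/2 + s/(2*c) \<notin> \<int>\<^sub>\<le>\<^sub>0"
    and "1 + (v/2 - a/(2*c) - b/(2*c)) \<notin> \<int>\<^sub>\<le>\<^sub>0"
    and "1 + (v/2 - a/(2*c) + b/(2*c)) \<notin> \<int>\<^sub>\<le>\<^sub>0"
    and "1 + (v/2 + a/(2*c) + b/(2*c)) \<notin> \<int>\<^sub>\<le>\<^sub>0"
    and "1 + (v/2 + a/(2*c) - b/(2*c)) \<notin> \<int>\<^sub>\<le>\<^sub>0"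
  shows "let \<sigma>1 = v/2 - s/(2*c); \<sigma>2 = v/2 + s/(2*c);
             \<sigma>3 = v/2 - a/(2*c) - b/(2*c); \<sigma>4 = v/2 - a/(2*c) + b/(2*c);
             \<sigma>5 = v/2 + a/(2*c) + b/(2*c); \<sigma>6 = v/2 + a/(2*c) - b/(2*c);
             P = (v * c - a - b) * (v * c + a + b) * (v * c - a + b) * (v * c + a - b)
         in ((\<lambda>x::real. sinh (a * complex_of_real x) * cosh (b * complex_of_real x) / cosh_pow v c x)
             has_integral
               ((2::complex) powr v * (v^2 * a * c^2 - a^3 + a * b^2) / P *
                hypergeom [v, 1 + \<sigma>1, 1 + \<sigma>2, \<sigma>3, \<sigma>4, \<sigma>5, \<sigma>6]
                          [\<sigma>1, \<sigma>2, 1 + \<sigma>3, 1 + \<sigma>4, 1 + \<sigma>5, 1 + \<sigma>6] (-1)))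
             {0<..}"
proof -
  interpret intg2 v a b c s
    by unfold_locales (use assms in simp_all)
  have hyp: "hypergeom [v, 1 + (v/2 - s/(2*c)), 1 + (v/2 + s/(2*c)), v/2 - a/(2*c) - b/(2*c),
         v/2 - a/(2*c) + b/(2*c), v/2 + a/(2*c) + b/(2*c), v/2 + a/(2*c) - b/(2*c)]
       [v/2 - s/(2*c), v/2 + s/(2*c), 1 + (v/2 - a/(2*c) - b/(2*c)), 1 + (v/2 - a/(2*c) + b/(2*c)),
         1 + (v/2 + a/(2*c) + b/(2*c)), 1 + (v/2 + a/(2*c) - b/(2*c))] (-1) = suminf tm"
    unfolding hypergeom_def tm_def[abs_def] sg1_def sg2_def sg3_def sg4_def sg5_def sg6_def ..
  have val: "2 powr v * (NP * suminf tm) = (2::complex) powr v * (v^2 * a * c^2 - a^3 + a * b^2) /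
      ((v * c - a - b) * (v * c + a + b) * (v * c - a + b) * (v * c + a - b)) * suminf tm"
    unfolding NP_def PP_def by simp
  define f where "f x = 2 powr v * (1 + w x) powr (-v) * E0 x" for x
  have neg1: "negligible {x \<in> {0<..} - {0..}. f x \<noteq> 0}"
    by (rule negligible_subset[OF negligible_empty]) auto
  have neg2: "negligible {x \<in> {0..} - {0<..}. f x \<noteq> 0}"
    by (rule negligible_subset[OF negligible_sing[of 0]]) auto
  have I0: "(f has_integral (2 powr v * (NP * suminf tm))) {0<..}"
    using has_integral_spike_set_eq[OF neg1 neg2] main_loc unfolding f_def[abs_def] by blast
  have I1: "((\<lambda>x::real. sinh (a * complex_of_real x) * cosh (b * complex_of_real x) / cosh_pow v c x) has_integral
      (2 powr v * (NP * suminf tm))) {0<..}"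
    using I0 unfolding f_def[abs_def] by (subst has_integral_cong[where g="\<lambda>x. 2 powr v * (1 + w x) powr (-v) * E0 x"])
      (simp_all add: integrand_eq w_def E0_def)
  show ?thesis unfolding Let_def hyp using I1 unfolding val .
qed


end
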